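(* Let $\dot{\mathcal H}$ be the point (bound-state) subspace of the Hydrogen atom Hamiltonian and $\dot H$ the restriction of the Hamiltonian to it, as described in the context. There exists a generic set $\mathcal R\subset\dot{\mathcal H}$ such that for each $|\psi\rangle\in\mathcal R$ and each $0<q<1$, \[D^-_{\mu_{|\psi\rangle}}(q)=0\qquad\text{and}\qquad D^+_{\mu_{|\psi\rangle}}(q)=\tfrac13 .\]
   Context: The Hydrogen atom Hamiltonian is $H=-\Delta-\kappa/|x|$ acting in $\mathrm{L}^2(\mathbb R^3)$, $\kappa>0$ (the unique self-adjoint extension from $C_c^\infty$). Its eigenvalues are $\lambda_n=-\Lambda/n^2$, $n=1,2,\dots$, with $\Lambda=\kappa^2/4$, each of multiplicity $n^2$, with orthonormal eigenfunctions $|n,l,m\rangle$, $l=0,\dots,n-1$, $m=-l,\dots,l$. $\dot{\mathcal H}$ denotes the closed subspace spanned by all $|n,l,m\rangle$, and $\dot H$ the restriction of $H$ to $\dot{\mathcal H}$, so $\dot H\sum a_{n,l,m}|n,l,m\rangle=\sum \lambda_n a_{n,l,m}|n,l,m\rangle$. For $|\psi\rangle=\sum a_{n,l,m}|n,l,m\rangle\in\dot{\mathcal H}$ its spectral measure is $\mu_{|\psi\rangle}=\sum_{n,l,m}|a_{n,l,m}|^2\delta_{\lambda_n}$. For a finite positive Borel measure $\mu$ on $\mathbb R$ and $q>0$, $q\neq1$, set $I_\mu(q,\epsilon)=\int_{\{x:\mu(B(x,\epsilon))>0\}}\mu(B(x,\epsilon))^{q-1}\,d\mu(x)$ with $B(x,\epsilon)=(x-\epsilon,x+\epsilon)$,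 and define the lower and upper generalized fractal dimensions $D^-_\mu(q)=\liminf_{\epsilon\downarrow0}\frac{\ln I_\mu(q,\epsilon)}{(q-1)\ln\epsilon}$, $D^+_\mu(q)=\limsup_{\epsilon\downarrow0}\frac{\ln I_\mu(q,\epsilon)}{(q-1)\ln\epsilon}$. A generic set in a complete metric space is a countable intersection of open dense sets. *)

theory Defs
  imports "HOL-Analysis.Analysis" "HOL-Probability.Probability"
begin

text \<open>Quantum numbers (n,l,m) of the hydrogen bound states.\<close>
definition hyd_index :: "(nat \<times> nat \<times> int) set" where
  "hyd_index = {(n, l, m). 1 \<le> n \<and> l < n \<and> \<bar>m\<bar> \<le> int l}"

definition hyd_eig :: "real \<Rightarrow> nat \<Rightarrow> real" where
  "hyd_eig \<kappa> n = - (\<kappa>\<^sup>2 / 4) / (real n)\<^sup>2"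

text \<open>The point subspace, written in coordinates w.r.t. the orthonormal
  eigenbasis |n,l,m>: square summable coefficient families a_(n,l,m).\<close>
definition point_space :: "(nat \<times> nat \<times> int \<Rightarrow> complex) set" where
  "point_space = {a. (\<forall>i. i \<notin> hyd_index \<longrightarrow> a i = 0) \<and>
                     (\<lambda>i. (cmod (a i))\<^sup>2) summable_on hyd_index}"

definition point_dist :: "(nat \<times> nat \<times> int \<Rightarrow> complex) \<Rightarrow> (nat \<times> nat \<times> int \<Rightarrow> complex) \<Rightarrow> real" where
  "point_dist a b = sqrt (\<Sum>\<^sub>\<infinity> i\<in>hyd_index. (cmod (a i - b i))\<^sup>2)"

definition generic_point_set :: "(nat \<times> nat \<times> int \<Rightarrow> complex) set \<Rightarrow> bool" where
  "generic_point_set R \<longleftrightarrow> (\<exists>U :: nat \<Rightarrow> (nat \<times> nat \<times> int \<Rightarrow> complex) set.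
      (\<forall>k. U k \<subseteq> point_space
         \<and> (\<forall>a\<in>U k. \<exists>r>0. \<forall>b\<in>point_space. point_dist a b < r \<longrightarrow> b \<in> U k)
         \<and> (\<forall>a\<in>point_space. \<forall>r>0. \<exists>b\<in>U k. point_dist a b < r))
      \<and> R = (\<Inter>k. U k))"

definition spec_measure :: "real \<Rightarrow> (nat \<times> nat \<times> int \<Rightarrow> complex) \<Rightarrow> real measure" where
  "spec_measure \<kappa> a = measure_of UNIV (sets borel)
     (\<lambda>A. \<Sum>\<^sub>\<infinity> i\<in>hyd_index. ennreal ((cmod (a i))\<^sup>2) * indicator A (hyd_eig \<kappa> (fst i)))"

definition I_mu :: "real measure \<Rightarrow> real \<Rightarrow> real \<Rightarrow> real" where
  "I_mu M q \<epsilon> = (LINT x:{x. measure M (ball x \<epsilon>) > 0}|M. (measure M (ball x \<epsilon>)) powr (q - 1))"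

definition lower_gen_dim :: "real measure \<Rightarrow> real \<Rightarrow> ereal" where
  "lower_gen_dim M q = Liminf (at_right 0) (\<lambda>\<epsilon>. ereal (ln (I_mu M q \<epsilon>) / ((q - 1) * ln \<epsilon>)))"

definition upper_gen_dim :: "real measure \<Rightarrow> real \<Rightarrow> ereal" where
  "upper_gen_dim M q = Limsup (at_right 0) (\<lambda>\<epsilon>. ereal (ln (I_mu M q \<epsilon>) / ((q - 1) * ln \<epsilon>)))"

end

theory Submission
  imports Defs
begin

definition Lam :: "real \<Rightarrow> real" where "Lam \<kappa> = \<kappa>\<^sup>2 / 4"

lemma Lam_pos: "\<kappa> > 0 \<Longrightarrow> Lam \<kappa> > 0"
  by (simp add: Lam_def)

lemma hyd_eig_eq: "hyd_eig \<kappa> n = - Lam \<kappa> / (real n)\<^sup>2"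
  by (simp add: hyd_eig_def Lam_def)

lemma hyd_eig_0: "hyd_eig \<kappa> 0 = 0"
  by (simp add: hyd_eig_def)

lemma hyd_eig_le0: "\<kappa> > 0 \<Longrightarrow> hyd_eig \<kappa> n \<le> 0"
  using Lam_pos[of \<kappa>] by (simp add: hyd_eig_eq)

lemma key_ineq:
  fixes x :: real assumes "x \<ge> 1"
  shows "1 / x\<^sup>2 - 1 / (x+1)\<^sup>2 \<ge> 1 / (x+1)^3"
proof -
  have x0: "x > 0" using assms by simp
  have e: "1 / x\<^sup>2 - 1 / (x+1)\<^sup>2 - 1 / (x+1)^3 = ((x+1)^3 - x\<^sup>2*(x+1) - x\<^sup>2) / (x\<^sup>2*(x+1)^3)"
    using x0 by (simp add: field_simps) (simp add: eval_nat_numeral algebra_simps)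
  have "(x+1)^3 - x\<^sup>2*(x+1) - x\<^sup>2 = x\<^sup>2 + 3*x + 1"
    by (simp add: power2_eq_square power3_eq_cube algebra_simps)
  also have "\<dots> \<ge> 0" using x0 by simp
  finally have "((x+1)^3 - x\<^sup>2*(x+1) - x\<^sup>2) / (x\<^sup>2*(x+1)^3) \<ge> 0"
    using x0 by simp
  then show ?thesis using e by linarith
qed

lemma gap_lemma:
  assumes k: "\<kappa> > 0" and n: "1 \<le> n" "n \<le> N" and mn: "m \<noteq> n"
  shows "\<bar>hyd_eig \<kappa> m - hyd_eig \<kappa> n\<bar> \<ge> Lam \<kappa> / (real N + 1)^3"
proof -
  define L where "L = Lam \<kappa>"
  have L: "L > 0" using Lam_pos[OF k] by (simp add: L_def)
  have nN: "real n + 1 \<le> real N + 1" using n by simp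
  have npos: "real n \<ge> 1" using n by simp
  have cube_mono: "L / (real N + 1)^3 \<le> L / (real n + 1)^3"
    using L nN npos by (intro divide_left_mono power_mono mult_pos_pos) auto
  show ?thesis
  proof (cases "m = 0")
    case True
    have "\<bar>hyd_eig \<kappa> m - hyd_eig \<kappa> n\<bar> = L / (real n)\<^sup>2"
      using True L by (simp add: hyd_eig_eq L_def)
    moreover have "(real n)\<^sup>2 \<le> (real n + 1)^3"
    proof -
      have "(real n)\<^sup>2 \<le> (real n + 1)\<^sup>2" using npos by (intro power_mono) auto
      also have "\<dots> \<le> (real n + 1)^3" using npos
        by (intro power_increasing) auto
      finally show ?thesis .
    qed
    then have "L / (real n + 1)^3 \<le> L / (real n)\<^sup>2"
      using L npos by (intro divide_left_mono) auto
    ultimately show ?thesis using cube_mono by (simp add: L_def)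
  next
    case False
    then have m1: "real m \<ge> 1" by simp
    show ?thesis
    proof (cases "m < n")
      case True
      define x where "x = real n - 1"
      have x1: "x \<ge> 1" using True m1 by (simp add: x_def)
      have "real m \<le> x" using True by (simp add: x_def)
      then have "1 / x\<^sup>2 \<le> 1 / (real m)\<^sup>2"
        using m1 by (intro divide_left_mono power_mono mult_pos_pos) auto
      moreover have "1 / x\<^sup>2 - 1 / (x+1)\<^sup>2 \<ge> 1 / (x+1)^3" by (rule key_ineq[OF x1])
      moreover have "x + 1 = real n" by (simp add: x_def)
      ultimately have "1 / (real m)\<^sup>2 - 1 / (real n)\<^sup>2 \<ge> 1 / (real n)^3" by simp
      then have "L * (1 / (real m)\<^sup>2 - 1 / (real n)\<^sup>2) \<ge> L * (1 / (real n)^3)"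
        using L by (intro mult_left_mono) auto
      moreover have "L / (real n + 1)^3 \<le> L / (real n)^3"
        using L npos by (intro divide_left_mono power_mono mult_pos_pos) auto
      moreover have "hyd_eig \<kappa> n - hyd_eig \<kappa> m = L * (1 / (real m)\<^sup>2 - 1 / (real n)\<^sup>2)"
        by (simp add: hyd_eig_eq L_def right_diff_distrib)
      moreover have "L * (1 / (real n)^3) = L / (real n)^3" by simp
      ultimately have "hyd_eig \<kappa> n - hyd_eig \<kappa> m \<ge> L / (real n + 1)^3"
        by linarith
      then show ?thesis using cube_mono by (simp add: L_def)
    next
      case False
      then have mn2: "n < m" using mn by simp
      define x where "x = real n"
      have x1: "x \<ge> 1" using npos by (simp add: x_def)
      have "x + 1 \<le> real m" using mn2 by (simp add: x_def)
      then have "1 / (real m)\<^sup>2 \<le> 1 / (x+1)\<^sup>2"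
        using x1 by (intro divide_left_mono power_mono mult_pos_pos) auto
      moreover have "1 / x\<^sup>2 - 1 / (x+1)\<^sup>2 \<ge> 1 / (x+1)^3" by (rule key_ineq[OF x1])
      ultimately have "1 / (real n)\<^sup>2 - 1 / (real m)\<^sup>2 \<ge> 1 / (real n + 1)^3" by (simp add: x_def)
      then have "L * (1 / (real n)\<^sup>2 - 1 / (real m)\<^sup>2) \<ge> L * (1 / (real n + 1)^3)"
        using L by (intro mult_left_mono) auto
      moreover have "hyd_eig \<kappa> m - hyd_eig \<kappa> n = L * (1 / (real n)\<^sup>2 - 1 / (real m)\<^sup>2)"
        by (simp add: hyd_eig_eq L_def right_diff_distrib)
      moreover have "L * (1 / (real n + 1)^3) = L / (real n + 1)^3" by simp
      ultimately have "hyd_eig \<kappa> m - hyd_eig \<kappa> n \<ge> L / (real n + 1)^3"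
        by linarith
      then show ?thesis using cube_mono by (simp add: L_def)
    qed
  qed
qed

lemma holder_sum:
  fixes x :: "'a \<Rightarrow> real"
  assumes F: "finite F" and nn: "\<And>j. j \<in> F \<Longrightarrow> x j \<ge> 0" and q: "0 < q" "q < 1"
  shows "(\<Sum>j\<in>F. x j powr q) \<le> real (card F) powr (1 - q) * (\<Sum>j\<in>F. x j) powr q"
proof (cases "(\<Sum>j\<in>F. x j) = 0")
  case True
  then have "\<forall>j\<in>F. x j = 0" using sum_nonneg_eq_0_iff[OF F] nn by blast
  then show ?thesis by simp
next
  case False
  define S where "S = (\<Sum>j\<in>F. x j)"
  have S0: "S > 0" using False nn by (simp add: S_def sum_nonneg order_less_le)
  have Fne: "F \<noteq> {}" using False by auto
  define n where "n = real (card F)"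
  have n0: "n > 0" using Fne F by (simp add: n_def card_gt_0_iff)
  define t where "t = S / n"
  have t0: "t > 0" using S0 n0 by (simp add: t_def)
  have each: "x j powr q * t powr (1 - q) \<le> q * x j + (1 - q) * t" if j: "j \<in> F" for j
  proof (cases "x j = 0")
    case True then show ?thesis using q t0 by simp
  next
    case False
    then have "x j > 0" using nn[OF j] by simp
    then show ?thesis using Youngs_inequality_0[of q "1-q" "x j" t] q t0 by simp
  qed
  have "(\<Sum>j\<in>F. x j powr q) * t powr (1 - q) = (\<Sum>j\<in>F. x j powr q * t powr (1 - q))"
    by (simp add: sum_distrib_right)
  also have "\<dots> \<le> (\<Sum>j\<in>F. q * x j + (1 - q) * t)"
    by (intro sum_mono each)
  also have "\<dots> = q * S + (1 - q) * t * n"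
    by (simp add: sum.distrib sum_distrib_left S_def n_def)
  also have "\<dots> = S" using n0 by (simp add: t_def field_simps)
  finally have A: "(\<Sum>j\<in>F. x j powr q) * t powr (1 - q) \<le> S" .
  have tp: "t powr (1 - q) > 0" using t0 by simp
  have "(\<Sum>j\<in>F. x j powr q) \<le> S / t powr (1 - q)"
    using A tp by (simp add: field_simps)
  also have "S / t powr (1 - q) = n powr (1 - q) * S powr q"
  proof -
    have t1: "t powr (1 - q) = S powr (1 - q) / n powr (1 - q)"
      using S0 n0 by (simp add: t_def powr_divide)
    have S1: "S = S powr q * S powr (1 - q)"
      using S0 by (simp add: powr_add[symmetric])
    have p1: "S powr (1 - q) > 0" "n powr (1 - q) > 0" using S0 n0 by auto
    have "S / t powr (1 - q) = S * n powr (1 - q) / S powr (1 - q)"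
      using p1 by (simp add: t1)
    also have "\<dots> = S powr q * n powr (1 - q)"
      using p1 by (subst S1) simp
    finally show ?thesis by simp
  qed
  finally show ?thesis by (simp add: n_def S_def)
qed

definition mB :: "real \<Rightarrow> (nat \<Rightarrow> real) \<Rightarrow> real \<Rightarrow> real \<Rightarrow> real" where
  "mB \<kappa> p \<epsilon> x = (\<Sum>m. p m * indicator (ball x \<epsilon>) (hyd_eig \<kappa> m))"

definition Jt :: "real \<Rightarrow> (nat \<Rightarrow> real) \<Rightarrow> real \<Rightarrow> real \<Rightarrow> nat \<Rightarrow> real" where
  "Jt \<kappa> p q \<epsilon> n = p n * mB \<kappa> p \<epsilon> (hyd_eig \<kappa> n) powr (q - 1)"

definition tls :: "(nat \<Rightarrow> real) \<Rightarrow> nat \<Rightarrow> real" where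
  "tls p N = (\<Sum>n. if N < n then p n else 0)"

locale pseq =
  fixes p :: "nat \<Rightarrow> real"
  assumes nn: "\<And>n. p n \<ge> 0" and sm: "summable p"
begin

lemma summable_ind: "summable (\<lambda>m. p m * indicator A (x m))"
  by (rule summable_comparison_test'[OF sm]) (auto simp: nn indicator_def)

lemma summable_if: "summable (\<lambda>m. if P m then p m else 0)"
  by (rule summable_comparison_test'[OF sm]) (auto simp: nn)

lemma mB_summable: "summable (\<lambda>m. p m * indicator (ball x \<epsilon>) (hyd_eig \<kappa> m))"
  by (rule summable_ind)

lemma mB_nonneg: "mB \<kappa> p \<epsilon> x \<ge> 0"
  unfolding mB_def by (intro suminf_nonneg summable_ind) (simp add: nn)

lemma mB_le: "mB \<kappa> p \<epsilon> x \<le> suminf p"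
  unfolding mB_def by (intro suminf_le summable_ind sm) (simp add: nn indicator_def)

lemma single_le: "p n \<le> suminf (\<lambda>m. if P m then p m else 0)" if "P n"
proof -
  have "(\<lambda>m. if m = n then p m else 0) sums p n" by (rule sums_single)
  then have "p n = suminf (\<lambda>m. if m = n then p m else 0)" by (simp add: sums_iff)
  also have "\<dots> \<le> suminf (\<lambda>m. if P m then p m else 0)"
    using that by (intro suminf_le summable_if) (auto simp: nn sums_iff[symmetric])
  finally show ?thesis .
qed

lemma mB_ge: "\<epsilon> > 0 \<Longrightarrow> p n \<le> mB \<kappa> p \<epsilon> (hyd_eig \<kappa> n)"
proof -
  assume e: "\<epsilon> > 0"
  have "p n \<le> suminf (\<lambda>m. if m = n then p m else 0)" by (rule single_le) simp
  also have "\<dots> \<le> mB \<kappa> p \<epsilon> (hyd_eig \<kappa> n)"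
    unfolding mB_def using e
    by (intro suminf_le summable_ind summable_if) (auto simp: nn)
  finally show ?thesis .
qed

lemma T_nonneg: "suminf p \<ge> 0" by (intro suminf_nonneg sm nn)

lemma mB_iso:
  assumes k: "\<kappa> > 0" and e: "0 < \<epsilon>" "\<epsilon> \<le> Lam \<kappa> / (real N + 1)^3" and n: "1 \<le> n" "n \<le> N"
  shows "mB \<kappa> p \<epsilon> (hyd_eig \<kappa> n) = p n"
proof -
  have "(\<lambda>m. p m * indicator (ball (hyd_eig \<kappa> n) \<epsilon>) (hyd_eig \<kappa> m)) = (\<lambda>m. if m = n then p m else 0)"
  proof
    fix m show "p m * indicator (ball (hyd_eig \<kappa> n) \<epsilon>) (hyd_eig \<kappa> m) = (if m = n then p m else 0)"
    proof (cases "m = n")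
      case True then show ?thesis using e by simp
    next
      case False
      have "\<bar>hyd_eig \<kappa> m - hyd_eig \<kappa> n\<bar> \<ge> \<epsilon>" using gap_lemma[OF k n False] e by linarith
      then have "hyd_eig \<kappa> m \<notin> ball (hyd_eig \<kappa> n) \<epsilon>" by (simp add: dist_real_def)
      then show ?thesis using False by simp
    qed
  qed
  then show ?thesis unfolding mB_def using sums_single[of n p] by (simp add: sums_iff)
qed

lemma Jt_nonneg: "Jt \<kappa> p q \<epsilon> n \<ge> 0"
  unfolding Jt_def by (simp add: nn)

lemma Jt_head:
  assumes e: "\<epsilon> > 0" and q: "q < 1"
  shows "Jt \<kappa> p q \<epsilon> n \<le> p n powr q"
proof (cases "p n = 0")
  case True then show ?thesis by (simp add: Jt_def)
next
  case False
  then have pn: "p n > 0" using nn[of n] by simp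
  have "mB \<kappa> p \<epsilon> (hyd_eig \<kappa> n) powr (q - 1) \<le> p n powr (q - 1)"
    using mB_ge[OF e, of n \<kappa>] pn q by (intro powr_mono2') auto
  then have "Jt \<kappa> p q \<epsilon> n \<le> p n * p n powr (q - 1)"
    unfolding Jt_def using pn by (intro mult_left_mono) auto
  also have "\<dots> = p n powr q" using pn by (simp add: powr_mult_base)
  finally show ?thesis .
qed

lemma Jt_iso:
  assumes k: "\<kappa> > 0" and e: "0 < \<epsilon>" "\<epsilon> \<le> Lam \<kappa> / (real N + 1)^3" and n: "1 \<le> n" "n \<le> N"
  shows "Jt \<kappa> p q \<epsilon> n = p n powr q"
proof (cases "p n = 0")
  case True then show ?thesis by (simp add: Jt_def)
next
  case False
  then have pn: "p n > 0" using nn[of n] by simp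
  show ?thesis unfolding Jt_def mB_iso[OF k e n] using pn by (simp add: powr_mult_base)
qed

lemma tls_nonneg: "tls p N \<ge> 0"
  unfolding tls_def by (intro suminf_nonneg summable_if) (simp add: nn)

lemma tls_le: "tls p N \<le> suminf p"
  unfolding tls_def by (intro suminf_le summable_if sm) (simp add: nn)

lemma J_bound:
  assumes k: "\<kappa> > 0" and q: "0 < q" "q < 1" and e: "\<epsilon> > 0" and N: "N \<ge> 1"
  shows "summable (Jt \<kappa> p q \<epsilon>) \<and> suminf (Jt \<kappa> p q \<epsilon>) \<le> (\<Sum>n\<le>N. p n powr q)
           + (Lam \<kappa> / ((real N)\<^sup>2 * \<epsilon>) + 1) powr (1 - q) * tls p N powr q"
proof -
  define L where "L = Lam \<kappa> / (real N)\<^sup>2"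
  have L0: "L > 0" using Lam_pos[OF k] N by (simp add: L_def)
  define c where "c n = nat \<lfloor>(hyd_eig \<kappa> n + L) / \<epsilon>\<rfloor>" for n
  define K where "K = nat \<lfloor>L / \<epsilon>\<rfloor>"
  define F where "F = {..K}"
  define s where "s j = (\<Sum>n. if N < n \<and> c n = j then p n else 0)" for j
  have lam_range: "-L < hyd_eig \<kappa> n \<and> hyd_eig \<kappa> n \<le> 0" if "N < n" for n
  proof -
    have "real N < real n" using that by simp
    then have "(real N)\<^sup>2 < (real n)\<^sup>2" using N by (intro power_strict_mono) auto
    then have "Lam \<kappa> / (real n)\<^sup>2 < Lam \<kappa> / (real N)\<^sup>2"
      using Lam_pos[OF k] N \<open>real N < real n\<close> by (intro divide_strict_left_mono) auto
    then show ?thesis using hyd_eig_le0[OF k, of n] by (simp add: hyd_eig_eq L_def)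
  qed
  have cF: "c n \<in> F" if "N < n" for n
  proof -
    have "(hyd_eig \<kappa> n + L) / \<epsilon> \<le> L / \<epsilon>" using lam_range[OF that] e by (simp add: divide_right_mono)
    then have "\<lfloor>(hyd_eig \<kappa> n + L) / \<epsilon>\<rfloor> \<le> \<lfloor>L / \<epsilon>\<rfloor>" by (rule floor_mono)
    then show ?thesis by (simp add: c_def F_def K_def nat_mono)
  qed
  have close: "hyd_eig \<kappa> m \<in> ball (hyd_eig \<kappa> n) \<epsilon>" if "N < n" "N < m" "c m = c n" for m n
  proof -
    define u where "u = (hyd_eig \<kappa> n + L) / \<epsilon>"
    define v where "v = (hyd_eig \<kappa> m + L) / \<epsilon>"
    have u0: "u \<ge> 0" "v \<ge> 0" using lam_range[OF that(1)] lam_range[OF that(2)] e by (auto simp: u_def v_def)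
    then have f0: "\<lfloor>u\<rfloor> \<ge> 0" "\<lfloor>v\<rfloor> \<ge> 0" by auto
    have "nat \<lfloor>u\<rfloor> = nat \<lfloor>v\<rfloor>" using that(3) by (simp add: c_def u_def v_def)
    then have fe: "\<lfloor>u\<rfloor> = \<lfloor>v\<rfloor>" by (metis eq_nat_nat_iff f0(1) f0(2))
    have "of_int \<lfloor>u\<rfloor> \<le> u" "u < of_int \<lfloor>u\<rfloor> + 1" "of_int \<lfloor>v\<rfloor> \<le> v" "v < of_int \<lfloor>v\<rfloor> + 1"
      by linarith+
    then have "\<bar>u - v\<bar> < 1" using fe by linarith
    moreover have "u - v = (hyd_eig \<kappa> n - hyd_eig \<kappa> m) / \<epsilon>"
      by (simp add: u_def v_def add_divide_distrib diff_divide_distrib)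
    ultimately have "\<bar>hyd_eig \<kappa> n - hyd_eig \<kappa> m\<bar> / \<epsilon> < 1" using e by simp
    then have "\<bar>hyd_eig \<kappa> n - hyd_eig \<kappa> m\<bar> < \<epsilon>" using e by (simp add: field_simps)
    then show ?thesis by (simp add: dist_real_def)
  qed
  define g where "g n = (if n \<le> N then p n powr q else 0)
     + (\<Sum>j\<in>F. s j powr (q - 1) * (if N < n \<and> c n = j then p n else 0))" for n
  have s_nn: "s j \<ge> 0" for j unfolding s_def by (intro suminf_nonneg summable_if) (simp add: nn)
  have Jg: "Jt \<kappa> p q \<epsilon> n \<le> g n" for n
  proof (cases "n \<le> N")
    case True
    then have "g n = p n powr q" by (simp add: g_def)
    then show ?thesis using Jt_head[OF e q(2)] by simp
  next
    case False
    then have nN: "N < n" by simp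
    have gn: "g n = s (c n) powr (q - 1) * p n"
    proof -
      have "(\<Sum>j\<in>F. s j powr (q - 1) * (if N < n \<and> c n = j then p n else 0))
           = (\<Sum>j\<in>F. if j = c n then s j powr (q - 1) * p n else 0)"
        using nN by (intro sum.cong) auto
      also have "\<dots> = s (c n) powr (q - 1) * p n" using cF[OF nN] by (simp add: F_def)
      finally show ?thesis using False by (simp add: g_def)
    qed
    show ?thesis
    proof (cases "p n = 0")
      case True then show ?thesis by (simp add: Jt_def gn)
    next
      case False
      then have pn: "p n > 0" using nn[of n] by simp
      have "p n \<le> s (c n)" unfolding s_def by (rule single_le) (use nN in simp)
      then have s0: "s (c n) > 0" using pn by simp
      have "s (c n) \<le> mB \<kappa> p \<epsilon> (hyd_eig \<kappa> n)"
        unfolding s_def mB_def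
      proof (intro suminf_le summable_if summable_ind)
        fix m show "(if N < m \<and> c m = c n then p m else 0) \<le> p m * indicator (ball (hyd_eig \<kappa> n) \<epsilon>) (hyd_eig \<kappa> m)"
          using close[OF nN, of m] nn[of m] by (auto simp: indicator_def)
      qed
      then have "mB \<kappa> p \<epsilon> (hyd_eig \<kappa> n) powr (q - 1) \<le> s (c n) powr (q - 1)"
        using s0 q by (intro powr_mono2') auto
      then have "p n * mB \<kappa> p \<epsilon> (hyd_eig \<kappa> n) powr (q - 1) \<le> p n * s (c n) powr (q - 1)"
        using pn by (intro mult_left_mono) auto
      then show ?thesis unfolding Jt_def gn by (simp add: mult.commute)
    qed
  qed
  have h_sm: "summable (\<lambda>n. if n \<le> N then p n powr q else 0)"
    by (rule summable_finite[of "{..N}"]) auto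
  have g_sm: "summable g"
    unfolding g_def
    by (intro summable_add h_sm summable_sum summable_mult summable_if)
  have J_sm: "summable (Jt \<kappa> p q \<epsilon>)"
    by (rule summable_comparison_test'[OF g_sm]) (use Jg Jt_nonneg in auto)
  have "suminf (Jt \<kappa> p q \<epsilon>) \<le> suminf g" by (intro suminf_le J_sm g_sm Jg)
  also have "suminf g = (\<Sum>n\<le>N. p n powr q) + (\<Sum>j\<in>F. s j powr (q - 1) * s j)"
  proof -
    have "suminf g = (\<Sum>n. if n \<le> N then p n powr q else 0)
        + (\<Sum>n. \<Sum>j\<in>F. s j powr (q - 1) * (if N < n \<and> c n = j then p n else 0))"
      unfolding g_def
      by (intro suminf_add[symmetric] h_sm summable_sum summable_mult summable_if)
    also have "(\<Sum>n. if n \<le> N then p n powr q else 0) = (\<Sum>n\<le>N. p n powr q)"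
      by (subst suminf_finite[of "{..N}"]) auto
    also have "(\<Sum>n. \<Sum>j\<in>F. s j powr (q - 1) * (if N < n \<and> c n = j then p n else 0))
        = (\<Sum>j\<in>F. \<Sum>n. s j powr (q - 1) * (if N < n \<and> c n = j then p n else 0))"
      by (intro suminf_sum summable_mult summable_if)
    also have "\<dots> = (\<Sum>j\<in>F. s j powr (q - 1) * s j)"
      unfolding s_def by (intro sum.cong refl suminf_mult summable_if)
    finally show ?thesis .
  qed
  also have "(\<Sum>j\<in>F. s j powr (q - 1) * s j) = (\<Sum>j\<in>F. s j powr q)"
  proof (intro sum.cong refl)
    fix j show "s j powr (q - 1) * s j = s j powr q"
    proof (cases "s j = 0")
      case True then show ?thesis by simp
    next
      case False then have "s j > 0" using s_nn[of j] by simp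
      then show ?thesis by (simp add: powr_mult_base mult.commute)
    qed
  qed
  also have "(\<Sum>j\<in>F. s j powr q) \<le> real (card F) powr (1 - q) * (\<Sum>j\<in>F. s j) powr q"
    by (rule holder_sum) (use q s_nn in \<open>auto simp: F_def\<close>)
  also have "(\<Sum>j\<in>F. s j) = tls p N"
  proof -
    have "(\<Sum>j\<in>F. s j) = (\<Sum>n. \<Sum>j\<in>F. (if N < n \<and> c n = j then p n else 0))"
      unfolding s_def by (intro suminf_sum[symmetric] summable_if)
    also have "\<dots> = (\<Sum>n. if N < n then p n else 0)"
    proof (intro suminf_cong)
      fix n show "(\<Sum>j\<in>F. (if N < n \<and> c n = j then p n else 0)) = (if N < n then p n else 0)"
      proof (cases "N < n")
        case True
        have "(\<Sum>j\<in>F. (if N < n \<and> c n = j then p n else 0)) = (\<Sum>j\<in>F. if j = c n then p n else 0)"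
          using True by (intro sum.cong) auto
        also have "\<dots> = p n" using cF[OF True] by (simp add: F_def)
        finally show ?thesis using True by simp
      qed simp
    qed
    finally show ?thesis by (simp add: tls_def)
  qed
  also have "real (card F) powr (1 - q) * tls p N powr q
      \<le> (Lam \<kappa> / ((real N)\<^sup>2 * \<epsilon>) + 1) powr (1 - q) * tls p N powr q"
  proof (intro mult_right_mono powr_mono2)
    have "real K \<le> L / \<epsilon>" using L0 e by (simp add: K_def)
    then show "real (card F) \<le> Lam \<kappa> / ((real N)\<^sup>2 * \<epsilon>) + 1"
      by (simp add: F_def L_def field_simps)
  qed (use q in auto)
  finally show ?thesis using J_sm by simp
qed

lemma J_sm: "\<kappa> > 0 \<Longrightarrow> 0 < q \<Longrightarrow> q < 1 \<Longrightarrow> \<epsilon> > 0 \<Longrightarrow> summable (Jt \<kappa> p q \<epsilon>)"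
  using J_bound[of \<kappa> q \<epsilon> 1] by auto

lemma J_lower_T:
  assumes k: "\<kappa> > 0" and q: "0 < q" "q < 1" and e: "\<epsilon> > 0"
  shows "suminf p powr q \<le> suminf (Jt \<kappa> p q \<epsilon>)"
proof (cases "suminf p = 0")
  case True then show ?thesis using Jt_nonneg J_sm[OF k q e] by (simp add: suminf_nonneg)
next
  case False
  define T where "T = suminf p"
  have T0: "T > 0" using False T_nonneg by (simp add: T_def)
  have le: "p n * T powr (q - 1) \<le> Jt \<kappa> p q \<epsilon> n" for n
  proof (cases "p n = 0")
    case True then show ?thesis by (simp add: Jt_def)
  next
    case False
    then have pn: "p n > 0" using nn[of n] by simp
    have m0: "mB \<kappa> p \<epsilon> (hyd_eig \<kappa> n) > 0" using mB_ge[OF e, of n \<kappa>] pn by simp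
    have "T powr (q - 1) \<le> mB \<kappa> p \<epsilon> (hyd_eig \<kappa> n) powr (q - 1)"
      using m0 q mB_le by (intro powr_mono2') (auto simp: T_def)
    then show ?thesis unfolding Jt_def using pn by (intro mult_left_mono) auto
  qed
  have "suminf (\<lambda>n. p n * T powr (q - 1)) \<le> suminf (Jt \<kappa> p q \<epsilon>)"
    by (intro suminf_le le summable_mult2 sm J_sm[OF k q e])
  moreover have "suminf (\<lambda>n. p n * T powr (q - 1)) = T * T powr (q - 1)"
    using suminf_mult2[OF sm, of "T powr (q - 1)"] by (simp add: T_def)
  moreover have "T * T powr (q - 1) = T powr q" using T0 by (simp add: powr_mult_base)
  ultimately show ?thesis by (simp add: T_def)
qed

lemma J_iso_lower:
  assumes k: "\<kappa> > 0" and q: "0 < q" "q < 1" and e: "0 < \<epsilon>" "\<epsilon> \<le> Lam \<kappa> / (real N + 1)^3"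
    and G: "G \<subseteq> {1..N}"
  shows "(\<Sum>n\<in>G. p n powr q) \<le> suminf (Jt \<kappa> p q \<epsilon>)"
proof -
  have fG: "finite G" using G finite_subset by blast
  have "(\<Sum>n\<in>G. p n powr q) = (\<Sum>n\<in>G. Jt \<kappa> p q \<epsilon> n)"
    using G by (intro sum.cong refl Jt_iso[OF k e, symmetric]) auto
  also have "\<dots> \<le> suminf (Jt \<kappa> p q \<epsilon>)"
    by (intro sum_le_suminf J_sm[OF k q e(1)] fG) (simp add: Jt_nonneg)
  finally show ?thesis .
qed

lemma powr_le_one_add: "x \<ge> 0 \<Longrightarrow> 0 \<le> (a::real) \<Longrightarrow> a \<le> 1 \<Longrightarrow> x powr a \<le> 1 + x"
proof -
  assume x: "x \<ge> 0" and a: "0 \<le> a" "a \<le> 1"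
  show ?thesis
  proof (cases "x \<le> 1")
    case True then have "x powr a \<le> 1" using x a by (intro powr_le1) auto
    then show ?thesis using x by simp
  next
    case False
    then have "x powr a \<le> x powr 1" using a by (intro powr_mono) auto
    then show ?thesis using False by simp
  qed
qed

lemma head_bound:
  assumes q: "0 < q" "q < 1"
  shows "(\<Sum>n\<le>N. p n powr q) \<le> (real N + 1) * (1 + suminf p)"
proof -
  have "(\<Sum>n\<le>N. p n powr q) \<le> (\<Sum>n\<le>N. 1 + p n)"
    using q by (intro sum_mono powr_le_one_add nn) auto
  also have "\<dots> = (real N + 1) + (\<Sum>n\<le>N. p n)" by (simp add: sum.distrib)
  also have "(\<Sum>n\<le>N. p n) \<le> suminf p" by (intro sum_le_suminf sm) (auto simp: nn)
  then have "(real N + 1) + (\<Sum>n\<le>N. p n) \<le> (real N + 1) * (1 + suminf p)"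
  proof -
    have "real N * suminf p \<ge> 0" using T_nonneg by simp
    then show ?thesis using \<open>(\<Sum>n\<le>N. p n) \<le> suminf p\<close> by (simp add: algebra_simps)
  qed
  finally show ?thesis by simp
qed

lemma J_upper:
  assumes k: "\<kappa> > 0" and q: "0 < q" "q < 1" and e: "0 < \<epsilon>" "\<epsilon> \<le> 1"
  shows "suminf (Jt \<kappa> p q \<epsilon>) \<le> (Lam \<kappa> + 4) * (\<epsilon> powr (-1/3)) powr (1 - q) * suminf p powr q"
proof -
  define E where "E = \<epsilon> powr (-1/3)"
  define T where "T = suminf p"
  have T0: "T \<ge> 0" using T_nonneg by (simp add: T_def)
  have e3: "\<epsilon> powr (1/3) \<le> 1" "\<epsilon> powr (1/3) > 0" using e by (auto intro: powr_le1)
  have E1: "E \<ge> 1" unfolding E_def using e3 by (simp add: powr_minus_divide)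
  have EEE: "E * E * E * \<epsilon> = 1"
  proof -
    have "E * E * E = \<epsilon> powr (-1)" unfolding E_def using e by (simp add: powr_add[symmetric])
    then show ?thesis using e by (simp add: powr_minus_divide)
  qed
  define N where "N = nat \<lceil>E\<rceil>"
  have NE: "real N \<ge> E" "real N < E + 1" using E1 by (auto simp: N_def) linarith+
  have N1: "N \<ge> 1" using NE E1 by linarith
  have Ep: "E powr (1 - q) \<ge> 0" by simp
  from J_bound[OF k q e(1) N1]
  have J: "suminf (Jt \<kappa> p q \<epsilon>) \<le> (\<Sum>n\<le>N. p n powr q)
           + (Lam \<kappa> / ((real N)\<^sup>2 * \<epsilon>) + 1) powr (1 - q) * tls p N powr q" by simp
  have h1: "(\<Sum>n\<le>N. p n powr q) \<le> real (card {..N}) powr (1 - q) * (\<Sum>n\<le>N. p n) powr q"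
    by (rule holder_sum) (use q nn in auto)
  have h2: "(\<Sum>n\<le>N. p n) powr q \<le> T powr q"
    unfolding T_def by (intro powr_mono2 sum_le_suminf sm) (use q nn in \<open>auto intro: sum_nonneg\<close>)
  have h3: "real (card {..N}) powr (1 - q) \<le> 3 * E powr (1 - q)"
  proof -
    have "real (card {..N}) \<le> 3 * E" using NE E1 by simp
    then have "real (card {..N}) powr (1 - q) \<le> (3 * E) powr (1 - q)" using q by (intro powr_mono2) auto
    also have "\<dots> = 3 powr (1 - q) * E powr (1 - q)" using E1 by (simp add: powr_mult)
    also have "3 powr (1 - q) \<le> 3 powr 1" using q by (intro powr_mono) auto
    then have "3 powr (1 - q) * E powr (1 - q) \<le> 3 * E powr (1 - q)" by (intro mult_right_mono) auto
    finally show ?thesis .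
  qed
  have head: "(\<Sum>n\<le>N. p n powr q) \<le> 3 * E powr (1 - q) * T powr q"
  proof -
    have "(\<Sum>n\<le>N. p n powr q) \<le> real (card {..N}) powr (1 - q) * T powr q"
      using h1 h2 by (meson mult_left_mono order_trans powr_ge_zero)
    also have "\<dots> \<le> 3 * E powr (1 - q) * T powr q" using h3 by (intro mult_right_mono) auto
    finally show ?thesis .
  qed
  have t1: "Lam \<kappa> / ((real N)\<^sup>2 * \<epsilon>) + 1 \<le> (Lam \<kappa> + 1) * E"
  proof -
    have "E * E * \<epsilon> \<le> (real N)\<^sup>2 * \<epsilon>"
      using NE E1 e by (intro mult_right_mono) (auto simp: power2_eq_square intro: mult_mono)
    then have "Lam \<kappa> / ((real N)\<^sup>2 * \<epsilon>) \<le> Lam \<kappa> / (E * E * \<epsilon>)"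
      using Lam_pos[OF k] E1 e N1 by (intro divide_left_mono) (auto intro!: mult_pos_pos)
    also have "Lam \<kappa> / (E * E * \<epsilon>) = Lam \<kappa> * E"
      using EEE E1 e by (simp add: field_simps)
    finally show ?thesis using E1 by (simp add: algebra_simps)
  qed
  have tail: "(Lam \<kappa> / ((real N)\<^sup>2 * \<epsilon>) + 1) powr (1 - q) * tls p N powr q \<le> (Lam \<kappa> + 1) * E powr (1 - q) * T powr q"
  proof -
    have "(Lam \<kappa> / ((real N)\<^sup>2 * \<epsilon>) + 1) powr (1 - q) \<le> ((Lam \<kappa> + 1) * E) powr (1 - q)"
      using t1 q e by (intro powr_mono2) (auto intro!: add_nonneg_nonneg divide_nonneg_nonneg less_imp_le[OF Lam_pos[OF k]])
    also have "\<dots> = (Lam \<kappa> + 1) powr (1 - q) * E powr (1 - q)"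
      using E1 Lam_pos[OF k] by (simp add: powr_mult)
    also have "(Lam \<kappa> + 1) powr (1 - q) \<le> (Lam \<kappa> + 1) powr 1"
      using q Lam_pos[OF k] by (intro powr_mono) auto
    then have "(Lam \<kappa> + 1) powr (1 - q) * E powr (1 - q) \<le> (Lam \<kappa> + 1) * E powr (1 - q)"
      using Lam_pos[OF k] by (intro mult_right_mono) auto
    finally have A: "(Lam \<kappa> / ((real N)\<^sup>2 * \<epsilon>) + 1) powr (1 - q) \<le> (Lam \<kappa> + 1) * E powr (1 - q)" .
    have B: "tls p N powr q \<le> T powr q"
      unfolding T_def using q tls_nonneg tls_le by (intro powr_mono2) auto
    show ?thesis using A B Lam_pos[OF k] by (intro mult_mono) auto
  qed
  have "suminf (Jt \<kappa> p q \<epsilon>) \<le> 3 * E powr (1 - q) * T powr q + (Lam \<kappa> + 1) * E powr (1 - q) * T powr q"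
    using J head tail by linarith
  also have "\<dots> = (Lam \<kappa> + 4) * E powr (1 - q) * T powr q" by (simp add: algebra_simps)
  finally show ?thesis by (simp add: E_def T_def)
qed

end

definition Bn :: "nat \<Rightarrow> (nat \<times> int) set" where
  "Bn n = {(l, m). 1 \<le> n \<and> l < n \<and> \<bar>m\<bar> \<le> int l}"

definition pa :: "(nat \<times> nat \<times> int \<Rightarrow> complex) \<Rightarrow> nat \<Rightarrow> real" where
  "pa a n = (\<Sum>y\<in>Bn n. (cmod (a (n, y)))\<^sup>2)"

definition Mp :: "real \<Rightarrow> (nat \<Rightarrow> real) \<Rightarrow> real measure" where
  "Mp \<kappa> p = distr (density (count_space UNIV) (\<lambda>n. ennreal (p n))) borel (hyd_eig \<kappa>)"

lemma finite_Bn: "finite (Bn n)"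
proof -
  have "Bn n \<subseteq> {..<n} \<times> {-int n..int n}" by (auto simp: Bn_def)
  then show ?thesis by (rule finite_subset) auto
qed

lemma hyd_Sigma: "hyd_index = Sigma UNIV Bn"
  by (auto simp: hyd_index_def Bn_def)

lemma REG:
  fixes f :: "nat \<times> nat \<times> int \<Rightarrow> real"
  assumes "f summable_on hyd_index"
  shows "(\<lambda>n. \<Sum>y\<in>Bn n. f (n, y)) sums infsum f hyd_index"
proof -
  have "(f has_sum infsum f hyd_index) (Sigma UNIV Bn)"
    using assms hyd_Sigma by (simp add: has_sum_infsum)
  then have "((\<lambda>n. \<Sum>y\<in>Bn n. f (n, y)) has_sum infsum f hyd_index) UNIV"
    by (rule has_sum_SigmaD) (simp add: has_sum_finite finite_Bn)
  then show ?thesis by (rule has_sum_imp_sums)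
qed

lemma pa_nonneg: "pa a n \<ge> 0" unfolding pa_def by (simp add: sum_nonneg)

lemma pa_0: "pa a 0 = 0" unfolding pa_def Bn_def by simp

lemma ps_summable: "a \<in> point_space \<Longrightarrow> (\<lambda>i. (cmod (a i))\<^sup>2) summable_on hyd_index"
  by (simp add: point_space_def)

lemma pa_sums: "a \<in> point_space \<Longrightarrow> pa a sums infsum (\<lambda>i. (cmod (a i))\<^sup>2) hyd_index"
  using REG[OF ps_summable] unfolding pa_def by simp

lemma pseq_pa: "a \<in> point_space \<Longrightarrow> pseq (pa a)"
  using pa_sums by (unfold_locales) (auto simp: pa_nonneg sums_iff)

lemma ennreal_infsum:
  fixes g :: "'a \<Rightarrow> real"
  assumes "g summable_on A" "\<And>x. x \<in> A \<Longrightarrow> g x \<ge> 0"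
  shows "infsum (\<lambda>x. ennreal (g x)) A = ennreal (infsum g A)"
proof -
  have "\<And>F. \<lbrakk>finite F; F \<subseteq> A\<rbrakk> \<Longrightarrow> sum (ennreal \<circ> g) F = ennreal (sum g F)"
    by (metis (mono_tags, lifting) comp_def assms(2) subsetD sum.cong sum_ennreal)
  then have "infsum (ennreal \<circ> g) A = ennreal (infsum g A)"
    by (simp add: infsum_comm_additive_general assms(1))
  then show ?thesis by (simp add: comp_def)
qed

lemma measurable_eig: "hyd_eig \<kappa> \<in> measurable (density (count_space UNIV) f) borel"
  by simp

lemma emeasure_Mp:
  assumes "A \<in> sets borel"
  shows "emeasure (Mp \<kappa> p) A = (\<Sum>n. ennreal (p n) * indicator A (hyd_eig \<kappa> n))"
proof -
  have "emeasure (Mp \<kappa> p) A = emeasure (density (count_space UNIV) (\<lambda>n. ennreal (p n))) (hyd_eig \<kappa> -` A)"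
    unfolding Mp_def using assms by (subst emeasure_distr) auto
  also have "\<dots> = (\<integral>\<^sup>+ n. ennreal (p n) * indicator (hyd_eig \<kappa> -` A) n \<partial>count_space UNIV)"
    by (subst emeasure_density) auto
  also have "\<dots> = (\<Sum>n. ennreal (p n) * indicator A (hyd_eig \<kappa> n))"
    by (simp add: nn_integral_count_space_nat indicator_def)
  finally show ?thesis .
qed

lemma spec_eq:
  assumes a: "a \<in> point_space"
  shows "spec_measure \<kappa> a = Mp \<kappa> (pa a)"
proof -
  have sp: "space (Mp \<kappa> (pa a)) = UNIV" "sets (Mp \<kappa> (pa a)) = sets borel" by (simp_all add: Mp_def)
  have eq: "(\<Sum>\<^sub>\<infinity> i\<in>hyd_index. ennreal ((cmod (a i))\<^sup>2) * indicator A (hyd_eig \<kappa> (fst i)))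
      = emeasure (Mp \<kappa> (pa a)) A" if A: "A \<in> sets borel" for A
  proof -
    define g where "g i = (cmod (a i))\<^sup>2 * indicator A (hyd_eig \<kappa> (fst i))" for i
    have gs: "g summable_on hyd_index"
      by (rule summable_on_comparison_test[OF ps_summable[OF a]]) (auto simp: g_def indicator_def)
    have "(\<Sum>\<^sub>\<infinity> i\<in>hyd_index. ennreal ((cmod (a i))\<^sup>2) * indicator A (hyd_eig \<kappa> (fst i)))
        = (\<Sum>\<^sub>\<infinity> i\<in>hyd_index. ennreal (g i))"
      by (intro infsum_cong) (simp add: g_def indicator_def)
    also have "\<dots> = ennreal (infsum g hyd_index)"
      by (rule ennreal_infsum[OF gs]) (simp add: g_def)
    also have "infsum g hyd_index = (\<Sum>n. pa a n * indicator A (hyd_eig \<kappa> n))"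
    proof -
      have "(\<lambda>n. \<Sum>y\<in>Bn n. g (n, y)) sums infsum g hyd_index" by (rule REG[OF gs])
      moreover have "(\<lambda>n. \<Sum>y\<in>Bn n. g (n, y)) = (\<lambda>n. pa a n * indicator A (hyd_eig \<kappa> n))"
        by (simp add: g_def pa_def sum_distrib_right)
      ultimately show ?thesis by (simp add: sums_iff)
    qed
    also have "ennreal (\<Sum>n. pa a n * indicator A (hyd_eig \<kappa> n)) = (\<Sum>n. ennreal (pa a n * indicator A (hyd_eig \<kappa> n)))"
      by (rule suminf_ennreal2[symmetric]) (auto simp: pa_nonneg pseq.summable_ind[OF pseq_pa[OF a]])
    also have "\<dots> = emeasure (Mp \<kappa> (pa a)) A"
      by (simp add: emeasure_Mp[OF A] ennreal_mult'' ennreal_indicator)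
    finally show ?thesis .
  qed
  have "spec_measure \<kappa> a = measure_of UNIV (sets borel) (emeasure (Mp \<kappa> (pa a)))"
    unfolding spec_measure_def
    by (rule measure_of_eq) (auto simp: eq sets.sigma_sets_eq[of borel, simplified])
  also have "\<dots> = Mp \<kappa> (pa a)"
    using measure_of_of_measure[of "Mp \<kappa> (pa a)"] sp by simp
  finally show ?thesis .
qed


context pseq begin

lemma measure_Mp:
  assumes "A \<in> sets borel"
  shows "measure (Mp \<kappa> p) A = (\<Sum>n. p n * indicator A (hyd_eig \<kappa> n))"
proof -
  have "emeasure (Mp \<kappa> p) A = (\<Sum>n. ennreal (p n * indicator A (hyd_eig \<kappa> n)))"
    by (simp add: emeasure_Mp[OF assms] ennreal_mult'' ennreal_indicator)
  also have "\<dots> = ennreal (\<Sum>n. p n * indicator A (hyd_eig \<kappa> n))"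
    by (rule suminf_ennreal2) (auto simp: nn summable_ind)
  finally show ?thesis
    by (simp add: measure_def suminf_nonneg summable_ind nn)
qed

lemma mB_measurable: "(\<lambda>x. mB \<kappa> p \<epsilon> x) \<in> borel_measurable borel"
proof -
  have "(\<lambda>x. mB \<kappa> p \<epsilon> x) = (\<lambda>x. \<Sum>m. p m * indicator (ball (hyd_eig \<kappa> m) \<epsilon>) x)"
    unfolding mB_def by (intro ext suminf_cong) (simp add: indicator_def dist_commute)
  also have "\<dots> \<in> borel_measurable borel"
    by (intro borel_measurable_suminf borel_measurable_times borel_measurable_const
        borel_measurable_indicator) auto
  finally show ?thesis .
qed

lemma I_mu_eq:
  assumes k: "\<kappa> > 0" and q: "0 < q" "q < 1" and e: "\<epsilon> > 0"
  shows "I_mu (Mp \<kappa> p) q \<epsilon> = suminf (Jt \<kappa> p q \<epsilon>)"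
proof -
  have mb: "measure (Mp \<kappa> p) (ball x \<epsilon>) = mB \<kappa> p \<epsilon> x" for x
    by (simp add: measure_Mp mB_def)
  have h: "(\<lambda>x. indicator {x. measure (Mp \<kappa> p) (ball x \<epsilon>) > 0} x *\<^sub>R measure (Mp \<kappa> p) (ball x \<epsilon>) powr (q - 1))
      = (\<lambda>x. mB \<kappa> p \<epsilon> x powr (q - 1))"
  proof
    fix x show "indicator {x. measure (Mp \<kappa> p) (ball x \<epsilon>) > 0} x *\<^sub>R measure (Mp \<kappa> p) (ball x \<epsilon>) powr (q - 1)
      = mB \<kappa> p \<epsilon> x powr (q - 1)"
      using mB_nonneg[of \<kappa> \<epsilon> x] by (cases "mB \<kappa> p \<epsilon> x > 0") (auto simp: mb)
  qed
  have meas: "(\<lambda>x. mB \<kappa> p \<epsilon> x powr (q - 1)) \<in> borel_measurable (Mp \<kappa> p)"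
    using mB_measurable by (simp add: Mp_def)
  have "I_mu (Mp \<kappa> p) q \<epsilon> = integral\<^sup>L (Mp \<kappa> p) (\<lambda>x. mB \<kappa> p \<epsilon> x powr (q - 1))"
    unfolding I_mu_def set_lebesgue_integral_def h ..
  also have "\<dots> = enn2real (\<integral>\<^sup>+ x. ennreal (mB \<kappa> p \<epsilon> x powr (q - 1)) \<partial>Mp \<kappa> p)"
    by (rule integral_eq_nn_integral[OF meas]) simp
  also have "(\<integral>\<^sup>+ x. ennreal (mB \<kappa> p \<epsilon> x powr (q - 1)) \<partial>Mp \<kappa> p)
      = (\<integral>\<^sup>+ n. ennreal (mB \<kappa> p \<epsilon> (hyd_eig \<kappa> n) powr (q - 1)) \<partial>density (count_space UNIV) (\<lambda>n. ennreal (p n)))"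
    unfolding Mp_def using mB_measurable by (subst nn_integral_distr) auto
  also have "\<dots> = (\<integral>\<^sup>+ n. ennreal (p n) * ennreal (mB \<kappa> p \<epsilon> (hyd_eig \<kappa> n) powr (q - 1)) \<partial>count_space UNIV)"
    by (subst nn_integral_density) auto
  also have "\<dots> = (\<Sum>n. ennreal (Jt \<kappa> p q \<epsilon> n))"
    by (simp add: nn_integral_count_space_nat Jt_def ennreal_mult'' nn)
  also have "\<dots> = ennreal (suminf (Jt \<kappa> p q \<epsilon>))"
    by (rule suminf_ennreal2) (auto simp: Jt_nonneg J_sm[OF k q e])
  finally show ?thesis
    by (simp add: suminf_nonneg Jt_nonneg J_sm[OF k q e])
qed

end

type_synonym vec = "nat \<times> nat \<times> int \<Rightarrow> complex"


lemma sq_sum_summable: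
  fixes f g :: "'a \<Rightarrow> complex"
  assumes f: "(\<lambda>i. (cmod (f i))\<^sup>2) summable_on S" and g: "(\<lambda>i. (cmod (g i))\<^sup>2) summable_on S"
  shows "(\<lambda>i. (cmod (f i + g i))\<^sup>2) summable_on S"
proof (rule summable_on_comparison_test)
  show "(\<lambda>i. 2 * (cmod (f i))\<^sup>2 + 2 * (cmod (g i))\<^sup>2) summable_on S"
    by (intro summable_on_add summable_on_cmult_right f g)
  fix i
  have "cmod (f i + g i) \<le> cmod (f i) + cmod (g i)" by (rule norm_triangle_ineq)
  then have "(cmod (f i + g i))\<^sup>2 \<le> (cmod (f i) + cmod (g i))\<^sup>2" by (intro power_mono) auto
  also have "\<dots> \<le> 2 * (cmod (f i))\<^sup>2 + 2 * (cmod (g i))\<^sup>2"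
  proof -
    have "2 * (cmod (f i))\<^sup>2 + 2 * (cmod (g i))\<^sup>2 - (cmod (f i) + cmod (g i))\<^sup>2 = (cmod (f i) - cmod (g i))\<^sup>2"
      by (simp add: power2_eq_square algebra_simps)
    moreover have "(cmod (f i) - cmod (g i))\<^sup>2 \<ge> 0" by simp
    ultimately show ?thesis by linarith
  qed
  finally show "(cmod (f i + g i))\<^sup>2 \<le> 2 * (cmod (f i))\<^sup>2 + 2 * (cmod (g i))\<^sup>2" .
qed simp

lemma mink:
  fixes f g :: "'a \<Rightarrow> complex"
  assumes f: "(\<lambda>i. (cmod (f i))\<^sup>2) summable_on S" and g: "(\<lambda>i. (cmod (g i))\<^sup>2) summable_on S"
  shows "sqrt (\<Sum>\<^sub>\<infinity>i\<in>S. (cmod (f i + g i))\<^sup>2) \<le> sqrt (\<Sum>\<^sub>\<infinity>i\<in>S. (cmod (f i))\<^sup>2) + sqrt (\<Sum>\<^sub>\<infinity>i\<in>S. (cmod (g i))\<^sup>2)"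
proof -
  define A where "A = sqrt (\<Sum>\<^sub>\<infinity>i\<in>S. (cmod (f i))\<^sup>2)"
  define B where "B = sqrt (\<Sum>\<^sub>\<infinity>i\<in>S. (cmod (g i))\<^sup>2)"
  have AB: "A \<ge> 0" "B \<ge> 0" by (auto simp: A_def B_def infsum_nonneg)
  have "(\<Sum>\<^sub>\<infinity>i\<in>S. (cmod (f i + g i))\<^sup>2) \<le> (A + B)\<^sup>2"
  proof (rule infsum_le_finite_sums[OF sq_sum_summable[OF f g]])
    fix F assume F: "finite F" "F \<subseteq> S"
    have LA: "L2_set (\<lambda>i. cmod (f i)) F \<le> A"
      unfolding L2_set_def A_def
      by (intro real_sqrt_le_mono finite_sum_le_infsum f F) auto
    have LB: "L2_set (\<lambda>i. cmod (g i)) F \<le> B"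
      unfolding L2_set_def B_def
      by (intro real_sqrt_le_mono finite_sum_le_infsum g F) auto
    have "L2_set (\<lambda>i. cmod (f i + g i)) F \<le> L2_set (\<lambda>i. cmod (f i) + cmod (g i)) F"
      by (intro L2_set_mono norm_triangle_ineq) auto
    also have "\<dots> \<le> L2_set (\<lambda>i. cmod (f i)) F + L2_set (\<lambda>i. cmod (g i)) F"
      by (rule L2_set_triangle_ineq)
    also have "\<dots> \<le> A + B" using LA LB by simp
    finally have "L2_set (\<lambda>i. cmod (f i + g i)) F \<le> A + B" .
    then have "(L2_set (\<lambda>i. cmod (f i + g i)) F)\<^sup>2 \<le> (A + B)\<^sup>2"
      by (intro power_mono) (auto simp: L2_set_def intro: sum_nonneg)
    moreover have "(L2_set (\<lambda>i. cmod (f i + g i)) F)\<^sup>2 = (\<Sum>i\<in>F. (cmod (f i + g i))\<^sup>2)"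
      unfolding L2_set_def by (simp add: sum_nonneg)
    ultimately show "(\<Sum>i\<in>F. (cmod (f i + g i))\<^sup>2) \<le> (A + B)\<^sup>2" by simp
  qed
  then have "sqrt (\<Sum>\<^sub>\<infinity>i\<in>S. (cmod (f i + g i))\<^sup>2) \<le> sqrt ((A + B)\<^sup>2)"
    by (rule real_sqrt_le_mono)
  also have "\<dots> = A + B" using AB by simp
  finally show ?thesis by (simp add: A_def B_def)
qed

lemma ps_diff_summable:
  assumes "a \<in> point_space" "b \<in> point_space"
  shows "(\<lambda>i. (cmod (a i - b i))\<^sup>2) summable_on hyd_index"
proof -
  have "(\<lambda>i. (cmod (- b i))\<^sup>2) summable_on hyd_index" using ps_summable[OF assms(2)] by simp
  from sq_sum_summable[OF ps_summable[OF assms(1)] this] show ?thesis by simp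
qed

lemma dist_sym: "point_dist a b = point_dist b a"
  unfolding point_dist_def by (simp add: norm_minus_commute)

lemma dist_self: "point_dist a a = 0"
  unfolding point_dist_def by simp

lemma dist_nonneg: "point_dist a b \<ge> 0"
  unfolding point_dist_def by (simp add: infsum_nonneg)

lemma dist_sq: "(point_dist a b)\<^sup>2 = (\<Sum>\<^sub>\<infinity>i\<in>hyd_index. (cmod (a i - b i))\<^sup>2)"
  unfolding point_dist_def by (simp add: infsum_nonneg)

lemma dist_tri:
  assumes "a \<in> point_space" "b \<in> point_space" "c \<in> point_space"
  shows "point_dist a c \<le> point_dist a b + point_dist b c"
  using mink[OF ps_diff_summable[OF assms(1,2)] ps_diff_summable[OF assms(2,3)]]
  unfolding point_dist_def by simp

lemma pa_sums': "(\<lambda>i. (cmod (c i))\<^sup>2) summable_on hyd_index \<Longrightarrow> pa c sums infsum (\<lambda>i. (cmod (c i))\<^sup>2) hyd_index"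
proof -
  assume h: "(\<lambda>i. (cmod (c i))\<^sup>2) summable_on hyd_index"
  show ?thesis using REG[OF h] unfolding pa_def by simp
qed

lemma pseq_pa': "(\<lambda>i. (cmod (c i))\<^sup>2) summable_on hyd_index \<Longrightarrow> pseq (pa c)"
  using pa_sums' by (unfold_locales) (auto simp: pa_nonneg sums_iff)

lemma dist_pa: "a \<in> point_space \<Longrightarrow> b \<in> point_space \<Longrightarrow> (point_dist a b)\<^sup>2 = suminf (pa (\<lambda>i. a i - b i))"
  using pa_sums'[OF ps_diff_summable] by (simp add: dist_sq sums_iff)

lemma pa_lower:
  assumes a: "a \<in> point_space" and b: "b \<in> point_space"
  shows "sqrt (pa b n) \<le> sqrt (pa a n) + point_dist a b"
proof -
  have fin: "finite (Bn n)" by (rule finite_Bn)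
  have "sqrt (\<Sum>\<^sub>\<infinity>y\<in>Bn n. (cmod (a (n, y) + (b (n, y) - a (n, y))))\<^sup>2)
      \<le> sqrt (\<Sum>\<^sub>\<infinity>y\<in>Bn n. (cmod (a (n, y)))\<^sup>2) + sqrt (\<Sum>\<^sub>\<infinity>y\<in>Bn n. (cmod (b (n, y) - a (n, y)))\<^sup>2)"
    by (rule mink) (simp_all add: fin)
  then have "sqrt (pa b n) \<le> sqrt (pa a n) + sqrt (pa (\<lambda>i. b i - a i) n)"
    by (simp add: pa_def fin)
  also have "pa (\<lambda>i. b i - a i) n \<le> suminf (pa (\<lambda>i. b i - a i))"
  proof -
    have "sum (pa (\<lambda>i. b i - a i)) {n} \<le> suminf (pa (\<lambda>i. b i - a i))"
      by (intro sum_le_suminf pseq.sm[OF pseq_pa'[OF ps_diff_summable[OF b a]]]) (auto simp: pa_nonneg)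
    then show ?thesis by simp
  qed
  also have "suminf (pa (\<lambda>i. b i - a i)) = (point_dist b a)\<^sup>2" by (simp add: dist_pa[OF b a])
  finally show ?thesis by (simp add: dist_sym dist_nonneg)
qed

lemma total_bound:
  assumes a: "a \<in> point_space" and b: "b \<in> point_space"
  shows "sqrt (suminf (pa a)) \<le> sqrt (suminf (pa b)) + point_dist a b"
proof -
  have s: "(\<lambda>i. (cmod (a i - b i))\<^sup>2) summable_on hyd_index" by (rule ps_diff_summable[OF a b])
  have "sqrt (\<Sum>\<^sub>\<infinity>i\<in>hyd_index. (cmod (b i + (a i - b i)))\<^sup>2)
     \<le> sqrt (\<Sum>\<^sub>\<infinity>i\<in>hyd_index. (cmod (b i))\<^sup>2) + sqrt (\<Sum>\<^sub>\<infinity>i\<in>hyd_index. (cmod (a i - b i))\<^sup>2)"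
    by (rule mink[OF ps_summable[OF b] s])
  then show ?thesis
    using pa_sums[OF a] pa_sums[OF b] by (simp add: sums_iff point_dist_def)
qed

lemma tail_bound:
  assumes a: "a \<in> point_space" and b: "b \<in> point_space" and bz: "\<And>i. fst i > N \<Longrightarrow> b i = 0"
  shows "tls (pa a) N \<le> (point_dist a b)\<^sup>2"
proof -
  interpret d: pseq "pa (\<lambda>i. a i - b i)" by (rule pseq_pa'[OF ps_diff_summable[OF a b]])
  have "tls (pa a) N = (\<Sum>n. if N < n then pa (\<lambda>i. a i - b i) n else 0)"
    unfolding tls_def by (intro suminf_cong) (auto simp: pa_def bz)
  also have "\<dots> \<le> suminf (pa (\<lambda>i. a i - b i))"
    by (intro suminf_le d.summable_if d.sm) (auto simp: d.nn)
  also have "\<dots> = (point_dist a b)\<^sup>2" by (simp add: dist_pa[OF a b])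
  finally show ?thesis .
qed

lemma (in pseq) tls_eq: "tls p N = suminf p - (\<Sum>n\<le>N. p n)"
proof -
  have "suminf p = (\<Sum>n. (if n \<le> N then p n else 0) + (if N < n then p n else 0))"
    by (intro suminf_cong) auto
  also have "\<dots> = (\<Sum>n. if n \<le> N then p n else 0) + tls p N"
    unfolding tls_def by (intro suminf_add[symmetric] summable_if)
  also have "(\<Sum>n. if n \<le> N then p n else 0) = (\<Sum>n\<le>N. p n)"
    by (subst suminf_finite[of "{..N}"]) auto
  finally show ?thesis by simp
qed

lemma (in pseq) tls_small: "r > 0 \<Longrightarrow> \<exists>N\<ge>1. tls p N < r"
proof -
  assume r: "r > 0"
  obtain N0 where N0: "\<forall>n\<ge>N0. norm ((\<Sum>i\<le>n. p i) - suminf p) < r"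
    using LIMSEQ_D[OF summable_LIMSEQ'[OF sm] r] by blast
  define N where "N = max N0 1"
  have "norm ((\<Sum>i\<le>N. p i) - suminf p) < r" using N0 by (simp add: N_def)
  then have "tls p N < r" by (simp add: tls_eq)
  then show ?thesis by (intro exI[of _ N]) (simp add: N_def)
qed

definition trunc :: "nat \<Rightarrow> vec \<Rightarrow> vec" where
  "trunc N a = (\<lambda>i. if fst i \<le> N then a i else 0)"

lemma trunc_ps: "a \<in> point_space \<Longrightarrow> trunc N a \<in> point_space"
proof -
  assume a: "a \<in> point_space"
  have "(\<lambda>i. (cmod (trunc N a i))\<^sup>2) summable_on hyd_index"
    by (rule summable_on_comparison_test[OF ps_summable[OF a]]) (auto simp: trunc_def)
  then show ?thesis using a unfolding point_space_def by (auto simp: trunc_def)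
qed

lemma trunc_close:
  assumes a: "a \<in> point_space" and r: "r > 0"
  shows "\<exists>N\<ge>1. point_dist a (trunc N a) < r"
proof -
  interpret pseq "pa a" by (rule pseq_pa[OF a])
  obtain N where N: "N \<ge> 1" "tls (pa a) N < r\<^sup>2" using tls_small[of "r\<^sup>2"] r by auto
  have "(point_dist a (trunc N a))\<^sup>2 = suminf (pa (\<lambda>i. a i - trunc N a i))"
    by (rule dist_pa[OF a trunc_ps[OF a]])
  also have "\<dots> = tls (pa a) N"
    unfolding tls_def by (intro suminf_cong) (auto simp: pa_def trunc_def)
  finally have "(point_dist a (trunc N a))\<^sup>2 < r\<^sup>2" using N by simp
  then have "point_dist a (trunc N a) < r"
    by (rule power2_less_imp_less) (simp add: less_imp_le[OF r])
  then show ?thesis using N by auto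
qed

definition rat :: "real \<Rightarrow> vec \<Rightarrow> real \<Rightarrow> real \<Rightarrow> real" where
  "rat \<kappa> a q \<epsilon> = ln (I_mu (spec_measure \<kappa> a) q \<epsilon>) / ((q - 1) * ln \<epsilon>)"

definition goodA :: "real \<Rightarrow> nat \<Rightarrow> vec \<Rightarrow> bool" where
  "goodA \<kappa> k a \<longleftrightarrow> (\<exists>\<epsilon>>0. \<epsilon> < 1 / real k \<and>
     (\<forall>q. 1 / real k \<le> q \<and> q \<le> 1 - 1 / real k \<longrightarrow> rat \<kappa> a q \<epsilon> \<le> 1 / real k))"

definition goodB :: "real \<Rightarrow> nat \<Rightarrow> vec \<Rightarrow> bool" where
  "goodB \<kappa> k a \<longleftrightarrow> (\<exists>\<epsilon>>0. \<epsilon> < 1 / real k \<and>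
     (\<forall>q. 1 / real k \<le> q \<and> q \<le> 1 - 1 / real k \<longrightarrow> rat \<kappa> a q \<epsilon> \<ge> 1 / 3 - 1 / real k))"

lemma I_mu_J:
  assumes k: "\<kappa> > 0" and a: "a \<in> point_space" and q: "0 < q" "q < 1" and e: "\<epsilon> > 0"
  shows "I_mu (spec_measure \<kappa> a) q \<epsilon> = suminf (Jt \<kappa> (pa a) q \<epsilon>)"
  using pseq.I_mu_eq[OF pseq_pa[OF a] k q e] spec_eq[OF a] by simp

lemma A_local:
  assumes k: "\<kappa> > 0" and kk: "k \<ge> 2" and b: "b \<in> point_space" and N: "N \<ge> 1"
    and bz: "\<And>i. fst i > N \<Longrightarrow> b i = 0"
  shows "\<exists>r>0. \<forall>c\<in>point_space. point_dist b c < r \<longrightarrow> goodA \<kappa> k c"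
proof -
  define Tb where "Tb = (sqrt (suminf (pa b)) + 1)\<^sup>2"
  define Cb where "Cb = (real N + 1) * (1 + Tb) + 1"
  have Tb0: "Tb \<ge> 0" by (simp add: Tb_def)
  have Cb1: "Cb \<ge> 1" using Tb0 by (simp add: Cb_def)
  have lnC: "ln Cb \<ge> 0" using Cb1 by simp
  have kpos: "real k > 0" using kk by simp
  define \<epsilon> where "\<epsilon> = exp (- ((real k)\<^sup>2 * ln Cb + real k))"
  have e0: "\<epsilon> > 0" by (simp add: \<epsilon>_def)
  have lne: "ln \<epsilon> = - ((real k)\<^sup>2 * ln Cb + real k)" by (simp add: \<epsilon>_def)
  have ek: "\<epsilon> < 1 / real k"
  proof -
    have "\<epsilon> \<le> exp (- real k)" unfolding \<epsilon>_def using lnC by simp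
    also have "exp (- real k) = 1 / exp (real k)" by (simp add: exp_minus field_simps)
    also have "\<dots> < 1 / real k"
    proof -
      have "real k < 1 + real k" by simp
      also have "\<dots> \<le> exp (real k)" by (rule exp_ge_add_one_self)
      finally show ?thesis using kpos by (intro divide_strict_left_mono) auto
    qed
    finally show ?thesis .
  qed
  have "1 / real k \<le> 1" using kk by simp
  then have e1: "\<epsilon> \<le> 1" using ek by linarith
  define B where "B = Lam \<kappa> / ((real N)\<^sup>2 * \<epsilon>) + 1"
  have B1: "B \<ge> 1" using Lam_pos[OF k] e0 N by (simp add: B_def)
  define \<delta> where "\<delta> = B powr (- real k)"
  have d0: "\<delta> > 0" using B1 by (simp add: \<delta>_def)
  define r where "r = min 1 (sqrt \<delta>)"
  have r0: "r > 0" using d0 by (simp add: r_def)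
  show ?thesis
  proof (intro exI[of _ r] conjI r0 ballI impI)
    fix c assume c: "c \<in> point_space" and dc: "point_dist b c < r"
    interpret pseq "pa c" by (rule pseq_pa[OF c])
    define T where "T = suminf (pa c)"
    have T0: "T \<ge> 0" using T_nonneg by (simp add: T_def)
    have "sqrt T \<le> sqrt (suminf (pa b)) + point_dist c b" unfolding T_def by (rule total_bound[OF c b])
    also have "point_dist c b < 1" using dc by (simp add: dist_sym r_def)
    finally have "sqrt T \<le> sqrt (suminf (pa b)) + 1" by simp
    then have "(sqrt T)\<^sup>2 \<le> Tb" unfolding Tb_def using T0 by (intro power_mono) auto
    then have TTb: "T \<le> Tb" using T0 by simp
    have "tls (pa c) N \<le> (point_dist c b)\<^sup>2" by (rule tail_bound[OF c b bz])
    also have "(point_dist c b)\<^sup>2 < (sqrt \<delta>)\<^sup>2"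
      using dc dist_nonneg[of c b] by (intro power_strict_mono) (auto simp: dist_sym r_def)
    also have "\<dots> = \<delta>" using d0 by simp
    finally have tl: "tls (pa c) N < \<delta>" .
    have "\<forall>q. 1 / real k \<le> q \<and> q \<le> 1 - 1 / real k \<longrightarrow> rat \<kappa> c q \<epsilon> \<le> 1 / real k"
    proof (intro allI impI)
      fix q assume qk: "1 / real k \<le> q \<and> q \<le> 1 - 1 / real k"
      have "1 / real k > 0" using kpos by simp
      then have q: "0 < q" "q < 1" using qk by linarith+
      have kq: "real k * q \<ge> 1" using qk kpos by (simp add: field_simps)
      define J where "J = suminf (Jt \<kappa> (pa c) q \<epsilon>)"
      have J0: "J \<ge> 0" unfolding J_def by (intro suminf_nonneg J_sm[OF k q e0]) (simp add: Jt_nonneg)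
      have Jb: "J \<le> (\<Sum>n\<le>N. pa c n powr q) + B powr (1 - q) * tls (pa c) N powr q"
        using J_bound[OF k q e0 N] by (simp add: J_def B_def)
      have h: "(\<Sum>n\<le>N. pa c n powr q) \<le> (real N + 1) * (1 + T)"
        unfolding T_def by (rule head_bound[OF q])
      have t: "B powr (1 - q) * tls (pa c) N powr q \<le> 1"
      proof -
        have "tls (pa c) N powr q \<le> \<delta> powr q" using tl q tls_nonneg by (intro powr_mono2) auto
        also have "\<delta> powr q = B powr (- real k * q)" unfolding \<delta>_def by (simp add: powr_powr)
        finally have "B powr (1 - q) * tls (pa c) N powr q \<le> B powr (1 - q) * B powr (- real k * q)"
          by (intro mult_left_mono) auto
        also have "\<dots> = B powr (1 - q - real k * q)" using B1 by (simp add: powr_add[symmetric])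
        also have "\<dots> \<le> B powr 0" using B1 kq q by (intro powr_mono) auto
        finally show ?thesis using B1 by simp
      qed
      have JC: "J \<le> Cb"
      proof -
        have m: "(real N + 1) * (1 + T) \<le> (real N + 1) * (1 + Tb)" using TTb by (intro mult_left_mono) auto
        show ?thesis unfolding Cb_def using Jb h t m by linarith
      qed
      have lnJ: "ln J \<le> ln Cb"
      proof (cases "J = 0")
        case True then show ?thesis using lnC by simp
      next
        case False then have "J > 0" using J0 by simp
        then show ?thesis using JC by simp
      qed
      define D where "D = (q - 1) * ln \<epsilon>"
      have D: "D = (1 - q) * ((real k)\<^sup>2 * ln Cb + real k)" by (simp add: D_def lne algebra_simps)
      have Dpos: "D > 0" unfolding D using q kpos lnC by (intro mult_pos_pos add_nonneg_pos) auto
      have "rat \<kappa> c q \<epsilon> = ln J / D" by (simp add: rat_def D_def J_def I_mu_J[OF k c q e0])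
      also have "\<dots> \<le> ln Cb / D" using lnJ Dpos by (intro divide_right_mono) auto
      also have "\<dots> \<le> 1 / real k"
      proof -
        have "1 - q \<ge> 1 / real k" using qk by simp
        then have "(1 - q) * ((real k)\<^sup>2 * ln Cb + real k) \<ge> (1 / real k) * ((real k)\<^sup>2 * ln Cb + real k)"
          using lnC kpos by (intro mult_right_mono) auto
        also have "(1 / real k) * ((real k)\<^sup>2 * ln Cb + real k) = real k * ln Cb + 1"
          using kpos by (simp add: field_simps power2_eq_square)
        finally have "real k * ln Cb \<le> D" unfolding D by simp
        then show ?thesis using Dpos kpos by (simp add: field_simps)
      qed
      finally show "rat \<kappa> c q \<epsilon> \<le> 1 / real k" .
    qed
    then show "goodA \<kappa> k c" unfolding goodA_def using e0 ek by blast
  qed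
qed

definition spr :: "nat \<Rightarrow> nat \<Rightarrow> real \<Rightarrow> vec" where
  "spr N0 N1 h = (\<lambda>i. if N0 < fst i \<and> fst i \<le> N1 \<and> snd i = (0, 0) then complex_of_real h else 0)"

lemma spr_has_sum:
  assumes h: "h \<ge> 0"
  shows "((\<lambda>i. (cmod (spr N0 N1 h i))\<^sup>2) has_sum (real (N1 - N0) * h\<^sup>2)) hyd_index"
proof -
  define S where "S = {N0<..N1} \<times> {(0::nat, 0::int)}"
  have fS: "finite S" by (simp add: S_def)
  have Sh: "S \<subseteq> hyd_index" by (auto simp: S_def hyd_index_def)
  have "(\<Sum>i\<in>S. (cmod (spr N0 N1 h i))\<^sup>2) = (\<Sum>i\<in>S. h\<^sup>2)"
    by (intro sum.cong refl) (auto simp: S_def spr_def h)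
  also have "\<dots> = real (N1 - N0) * h\<^sup>2" by (simp add: S_def card_cartesian_product)
  finally have e: "(\<Sum>i\<in>S. (cmod (spr N0 N1 h i))\<^sup>2) = real (N1 - N0) * h\<^sup>2" .
  show ?thesis
  proof (rule has_sum_finite_neutralI[OF fS Sh])
    show "real (N1 - N0) * h\<^sup>2 = (\<Sum>i\<in>S. (cmod (spr N0 N1 h i))\<^sup>2)" using e by simp
  qed (auto simp: spr_def S_def)
qed

lemma ps_zero: "a \<in> point_space \<Longrightarrow> i \<notin> hyd_index \<Longrightarrow> a i = 0"
  by (cases i rule: prod_cases3) (auto simp: point_space_def)

lemma B_local:
  assumes k: "\<kappa> > 0" and kk: "k \<ge> 3" and a: "a \<in> point_space" and N0: "N0 \<ge> 1"
    and \<eta>: "0 < \<eta>" "\<eta> \<le> 1"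
  shows "\<exists>b\<in>point_space. point_dist (trunc N0 a) b \<le> sqrt \<eta> \<and>
           (\<exists>r>0. \<forall>c\<in>point_space. point_dist b c < r \<longrightarrow> goodB \<kappa> k c)"
proof -
  have kpos: "real k > 0" using kk by simp
  define L where "L = Lam \<kappa>"
  have L0: "L > 0" using Lam_pos[OF k] by (simp add: L_def)
  have le2: "ln (\<eta> / 2) \<le> 0" using \<eta> by simp
  define Z where "Z = ln 2 - real k * ln (\<eta> / 2) + \<bar>ln L\<bar>"
  have Z0: "Z \<ge> 0"
  proof -
    have "real k * ln (\<eta> / 2) \<le> 0" using le2 kpos by (simp add: mult_nonneg_nonpos)
    then show ?thesis unfolding Z_def using ln_gt_zero[of 2] by linarith
  qed
  define N1 where "N1 = max (2 * N0 + 1) (nat \<lceil>exp (real k * Z) + L * real k\<rceil>)"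
  have N1a: "N1 \<ge> 2 * N0 + 1" by (simp add: N1_def)
  have N1b: "real N1 \<ge> exp (real k * Z) + L * real k"
  proof -
    have "real (nat \<lceil>exp (real k * Z) + L * real k\<rceil>) \<ge> exp (real k * Z) + L * real k" by linarith
    then show ?thesis unfolding N1_def by (metis (mono_tags) max.cobounded2 of_nat_le_iff order_trans)
  qed
  define K where "K = N1 - N0"
  have K1: "real K \<ge> (real N1 + 1) / 2" "K \<ge> 1" using N1a by (auto simp: K_def)
  define h where "h = sqrt (\<eta> / real K)"
  have h0: "h > 0" using \<eta> K1 by (simp add: h_def)
  have hh: "h\<^sup>2 = \<eta> / real K" using \<eta> K1 by (simp add: h_def)
  define b where "b = (\<lambda>i. trunc N0 a i + spr N0 N1 h i)"
  have ta: "trunc N0 a \<in> point_space" by (rule trunc_ps[OF a])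
  have sps: "(\<lambda>i. (cmod (spr N0 N1 h i))\<^sup>2) summable_on hyd_index"
    using spr_has_sum[of h] h0 by (auto simp: summable_on_def)
  have b_ps: "b \<in> point_space"
  proof -
    have "(\<lambda>i. (cmod (b i))\<^sup>2) summable_on hyd_index"
      unfolding b_def by (rule sq_sum_summable[OF ps_summable[OF ta] sps])
    moreover have "b i = 0" if "i \<notin> hyd_index" for i
    proof -
      have "trunc N0 a i = 0" using ta that by (rule ps_zero)
      moreover have "spr N0 N1 h i = 0" using that by (auto simp: spr_def hyd_index_def)
      ultimately show ?thesis by (simp add: b_def)
    qed
    ultimately show ?thesis by (simp add: point_space_def)
  qed
  have dtb: "point_dist (trunc N0 a) b = sqrt \<eta>"
  proof -
    have "(\<Sum>\<^sub>\<infinity>i\<in>hyd_index. (cmod (trunc N0 a i - b i))\<^sup>2) = (\<Sum>\<^sub>\<infinity>i\<in>hyd_index. (cmod (spr N0 N1 h i))\<^sup>2)"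
      by (intro infsum_cong) (simp add: b_def norm_minus_commute)
    also have "\<dots> = real K * h\<^sup>2" using spr_has_sum[of h] h0 by (simp add: infsumI K_def)
    also have "\<dots> = \<eta>" using hh K1 by simp
    finally show ?thesis by (simp add: point_dist_def)
  qed
  define \<epsilon> where "\<epsilon> = L / (real N1 + 1)^3"
  have e0: "\<epsilon> > 0" using L0 by (simp add: \<epsilon>_def)
  have ek: "\<epsilon> < 1 / real k"
  proof -
    have "real N1 + 1 \<le> (real N1 + 1)^3" by (rule self_le_power) auto
    then have "\<epsilon> \<le> L / (real N1 + 1)" unfolding \<epsilon>_def using L0 by (intro divide_left_mono) auto
    also have "\<dots> < L / (L * real k)"
    proof -
      have "L * real k < real N1 + 1" using N1b exp_gt_zero[of "real k * Z"] by linarith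
      then show ?thesis using L0 kpos by (intro divide_strict_left_mono) auto
    qed
    also have "\<dots> = 1 / real k" using L0 by simp
    finally show ?thesis .
  qed
  have k1: "1 / real k \<le> 1 / 3" using kk by (simp add: field_simps)
  have e1: "\<epsilon> < 1" using ek k1 by linarith
  have lne: "ln \<epsilon> = ln L - 3 * ln (real N1 + 1)"
    using L0 by (simp add: \<epsilon>_def ln_div ln_realpow)
  define r where "r = h / 4"
  have r0: "r > 0" using h0 by (simp add: r_def)
  have main: "goodB \<kappa> k c" if c: "c \<in> point_space" and dc: "point_dist b c < r" for c
  proof -
    interpret pseq "pa c" by (rule pseq_pa[OF c])
    define G where "G = {N0<..N1}"
    have cardG: "card G = K" by (simp add: G_def K_def)
    have G1: "G \<subseteq> {1..N1}" using N0 by (auto simp: G_def)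
    have pab: "pa b n = h\<^sup>2" if n: "n \<in> G" for n
    proof -
      have "pa b n = (\<Sum>y\<in>Bn n. (cmod (spr N0 N1 h (n, y)))\<^sup>2)"
        unfolding pa_def b_def using n by (intro sum.cong refl) (simp add: G_def trunc_def)
      also have "\<dots> = (\<Sum>y\<in>Bn n. if y = (0, 0) then h\<^sup>2 else 0)"
        using n h0 by (intro sum.cong refl) (auto simp: spr_def G_def)
      also have "\<dots> = h\<^sup>2"
      proof -
        have "(0, 0) \<in> Bn n" using n by (auto simp: Bn_def G_def)
        then show ?thesis by (simp add: sum.delta[OF finite_Bn])
      qed
      finally show ?thesis .
    qed
    have pcn: "pa c n \<ge> \<eta> / (2 * real K)" if n: "n \<in> G" for n
    proof -
      have "sqrt (pa b n) \<le> sqrt (pa c n) + point_dist c b" by (rule pa_lower[OF c b_ps])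
      then have "h \<le> sqrt (pa c n) + point_dist c b" using pab[OF n] h0 by simp
      moreover have "point_dist c b < h / 4" using dc by (simp add: dist_sym r_def)
      ultimately have "sqrt (pa c n) \<ge> 3 / 4 * h" by linarith
      then have "(3 / 4 * h)\<^sup>2 \<le> (sqrt (pa c n))\<^sup>2" using h0 by (intro power_mono) auto
      moreover have "(3 / 4 * h)\<^sup>2 = 9 / 16 * h\<^sup>2" by (simp add: power2_eq_square)
      moreover have "(sqrt (pa c n))\<^sup>2 = pa c n" using pa_nonneg[of c n] by simp
      ultimately have "9 / 16 * h\<^sup>2 \<le> pa c n" by simp
      moreover have "\<eta> / (2 * real K) \<le> 9 / 16 * h\<^sup>2" using hh \<eta> K1 by (simp add: field_simps)
      ultimately show ?thesis by linarith
    qed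
    have "\<forall>q. 1 / real k \<le> q \<and> q \<le> 1 - 1 / real k \<longrightarrow> rat \<kappa> c q \<epsilon> \<ge> 1 / 3 - 1 / real k"
    proof (intro allI impI)
      fix q assume qk: "1 / real k \<le> q \<and> q \<le> 1 - 1 / real k"
      have "1 / real k > 0" using kpos by simp
      then have q: "0 < q" "q < 1" using qk by linarith+
      have kq: "real k * (1 - q) \<ge> 1" using qk kpos by (simp add: field_simps)
      define J where "J = suminf (Jt \<kappa> (pa c) q \<epsilon>)"
      define x where "x = \<eta> / (2 * real K)"
      have x0: "x > 0" using \<eta> K1 by (simp add: x_def)
      define Lw where "Lw = real K * x powr q"
      have Lw0: "Lw > 0" using x0 K1 by (simp add: Lw_def)
      have JL: "Lw \<le> J"
      proof -
        have "Lw = (\<Sum>n\<in>G. x powr q)" by (simp add: Lw_def cardG)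
        also have "\<dots> \<le> (\<Sum>n\<in>G. pa c n powr q)"
          using pcn q x0 by (intro sum_mono powr_mono2) (auto simp: x_def)
        also have "\<dots> \<le> J" unfolding J_def
          by (rule J_iso_lower[OF k q e0 _ G1]) (simp add: \<epsilon>_def L_def)
        finally show ?thesis .
      qed
      have lnLw: "ln Lw = (1 - q) * ln (real K) + q * ln (\<eta> / 2)"
      proof -
        have "ln Lw = ln (real K) + q * ln x" using x0 K1 by (simp add: Lw_def ln_mult ln_powr)
        moreover have "ln x = ln (\<eta> / 2) - ln (real K)"
        proof -
          have "x = (\<eta> / 2) / real K" by (simp add: x_def field_simps)
          moreover have "real K > 0" using K1 by simp
          ultimately show ?thesis using \<eta> by (simp add: ln_div ln_mult)
        qed
        ultimately show ?thesis by (simp add: algebra_simps)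
      qed
      have lnJ: "ln J \<ge> (1 - q) * ln (real K) + ln (\<eta> / 2)"
      proof -
        have "ln Lw \<le> ln J" using JL Lw0 by simp
        moreover have "q * ln (\<eta> / 2) \<ge> ln (\<eta> / 2)"
        proof -
          have "(1 - q) * ln (\<eta> / 2) \<le> 0" using q le2 by (simp add: mult_nonneg_nonpos)
          then show ?thesis by (simp add: algebra_simps)
        qed
        ultimately show ?thesis using lnLw by linarith
      qed
      define Y where "Y = 3 * ln (real N1 + 1) - ln L"
      have Ypos: "Y > 0" using e1 e0 lne by (simp add: Y_def) (smt (verit) ln_less_zero_iff)
      define D where "D = (q - 1) * ln \<epsilon>"
      have D: "D = (1 - q) * Y" by (simp add: D_def Y_def lne algebra_simps)
      have Dpos: "D > 0" unfolding D using q Ypos by simp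
      define c3 where "c3 = 1 / 3 - 1 / real k"
      have c3: "0 \<le> c3" "c3 \<le> 1 / 3" using k1 kpos by (auto simp: c3_def)
      have s1: "(1 - q) * ln (real K) + ln (\<eta> / 2) \<ge> (1 - q) * (ln (real K) + real k * ln (\<eta> / 2))"
      proof -
        have "(real k * (1 - q)) * ln (\<eta> / 2) \<le> 1 * ln (\<eta> / 2)"
          using kq le2 by (intro mult_right_mono_neg) auto
        then show ?thesis by (simp add: algebra_simps)
      qed
      have lnK: "ln (real K) \<ge> ln (real N1 + 1) - ln 2"
      proof -
        have "ln ((real N1 + 1) / 2) \<le> ln (real K)" using K1 by (subst ln_le_cancel_iff) auto
        then show ?thesis by (simp add: ln_div)
      qed
      have lnN: "ln (real N1 + 1) \<ge> real k * Z"
      proof -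
        have "exp (real k * Z) \<le> real N1 + 1" using N1b L0 kpos by (smt (verit) mult_pos_pos)
        then have "ln (exp (real k * Z)) \<le> ln (real N1 + 1)" by (subst ln_le_cancel_iff) auto
        then show ?thesis by simp
      qed
      have s2: "ln (real K) + real k * ln (\<eta> / 2) \<ge> c3 * Y"
      proof -
        have "c3 * Y = (1 - 3 / real k) * ln (real N1 + 1) - c3 * ln L"
          using kpos by (simp add: c3_def Y_def field_simps)
        moreover have "- c3 * ln L \<le> \<bar>ln L\<bar>"
        proof -
          have "c3 * (- ln L) \<le> c3 * \<bar>ln L\<bar>" using c3 by (intro mult_left_mono) auto
          then have "- c3 * ln L \<le> c3 * \<bar>ln L\<bar>" by simp
          also have "\<dots> \<le> 1 * \<bar>ln L\<bar>" using c3 by (intro mult_right_mono) auto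
          finally show ?thesis by simp
        qed
        moreover have "(3 / real k) * ln (real N1 + 1) \<ge> Z"
        proof -
          have "(3 / real k) * ln (real N1 + 1) \<ge> (3 / real k) * (real k * Z)"
            using lnN kpos by (intro mult_left_mono) auto
          also have "(3 / real k) * (real k * Z) = 3 * Z" using kpos by simp
          finally show ?thesis using Z0 by linarith
        qed
        ultimately show ?thesis using lnK unfolding Z_def by (simp add: algebra_simps)
      qed
      have "ln J \<ge> c3 * D"
      proof -
        have "(1 - q) * (c3 * Y) \<le> (1 - q) * (ln (real K) + real k * ln (\<eta> / 2))"
          using s2 q by (intro mult_left_mono) auto
        moreover have "c3 * D = (1 - q) * (c3 * Y)" by (simp add: D algebra_simps)
        ultimately show ?thesis using lnJ s1 by linarith
      qed
      then have "c3 \<le> ln J / D" using Dpos by (simp add: le_divide_eq)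
      then show "rat \<kappa> c q \<epsilon> \<ge> 1 / 3 - 1 / real k"
        by (simp add: rat_def D_def J_def I_mu_J[OF k c q e0] c3_def)
    qed
    then show ?thesis unfolding goodB_def using e0 ek by blast
  qed
  show ?thesis
  proof (intro bexI[OF _ b_ps] conjI)
    show "point_dist (trunc N0 a) b \<le> sqrt \<eta>" using dtb by simp
    show "\<exists>r>0. \<forall>c\<in>point_space. point_dist b c < r \<longrightarrow> goodB \<kappa> k c" using r0 main by blast
  qed
qed

lemma lim0:
  fixes c q :: real assumes q: "q < 1"
  shows "((\<lambda>\<epsilon>. c / ((q - 1) * ln \<epsilon>)) \<longlongrightarrow> 0) (at_right 0)"
proof -
  have "filterlim (\<lambda>\<epsilon>::real. - ln \<epsilon>) at_top (at_right 0)"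
    using ln_at_0 by (simp add: filterlim_uminus_at_bot)
  then have "filterlim (\<lambda>\<epsilon>::real. (1 - q) * (- ln \<epsilon>)) at_top (at_right 0)"
    using q by (intro filterlim_tendsto_pos_mult_at_top[OF tendsto_const]) auto
  then have "filterlim (\<lambda>\<epsilon>::real. (q - 1) * ln \<epsilon>) at_infinity (at_right 0)"
    by (simp add: algebra_simps filterlim_at_top_imp_at_infinity)
  then show ?thesis by (rule tendsto_divide_0[OF tendsto_const])
qed

lemma ev01: "eventually (\<lambda>\<epsilon>::real. 0 < \<epsilon> \<and> \<epsilon> < 1) (at_right 0)"
  unfolding eventually_at_right_field by (intro exI[of _ 1]) auto

lemma small_k: "(e::real) > 0 \<Longrightarrow> \<exists>k\<ge>k0. 1 / real k < e"
proof -
  assume e: "e > 0"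
  obtain n where n: "inverse (real (Suc n)) < e" using reals_Archimedean[OF e] by blast
  have "1 / real (Suc n + k0) \<le> 1 / real (Suc n)" by (intro divide_left_mono) auto
  then have "1 / real (Suc n + k0) < e" using n by (simp add: inverse_eq_divide)
  then show ?thesis by (intro exI[of _ "Suc n + k0"]) auto
qed

lemma ereal_le_0:
  fixes X :: ereal
  assumes "\<And>k. k \<ge> k0 \<Longrightarrow> X \<le> ereal (1 / real k)"
  shows "X \<le> 0"
proof (rule ereal_le_epsilon2)
  fix e :: real assume e: "0 < e"
  obtain k where k: "k \<ge> k0" "1 / real k < e" using small_k[OF e] by blast
  have "X \<le> ereal (1 / real k)" using assms k by blast
  also have "\<dots> \<le> 0 + ereal e" using k by simp
  finally show "X \<le> 0 + ereal e" .
qed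

lemma ereal_ge_third:
  fixes X :: ereal
  assumes "\<And>k. k \<ge> k0 \<Longrightarrow> ereal (1 / 3 - 1 / real k) \<le> X"
  shows "ereal (1 / 3) \<le> X"
proof (rule ereal_le_epsilon2)
  fix e :: real assume e: "0 < e"
  obtain k where k: "k \<ge> k0" "1 / real k < e" using small_k[OF e] by blast
  have "ereal (1 / 3) \<le> ereal (1 / 3 - 1 / real k) + ereal e" using k by simp
  also have "\<dots> \<le> X + ereal e" using assms k by (intro add_right_mono) blast
  finally show "ereal (1 / 3) \<le> X + ereal e" .
qed

definition UP :: "(vec \<Rightarrow> bool) \<Rightarrow> vec set" where
  "UP P = {a\<in>point_space. \<exists>b\<in>point_space. \<exists>r>0. point_dist b a < r \<and>
            (\<forall>c\<in>point_space. point_dist b c < r \<longrightarrow> P c)}"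

lemma UP_iff: "a \<in> UP P \<longleftrightarrow> a \<in> point_space \<and> (\<exists>b\<in>point_space. \<exists>r>0. point_dist b a < r \<and>
            (\<forall>c\<in>point_space. point_dist b c < r \<longrightarrow> P c))"
  unfolding UP_def by (rule mem_Collect_eq)

lemma UP_sub: "UP P \<subseteq> point_space"
  using UP_iff by blast

lemma UP_P:
  assumes "a \<in> UP P" shows "P a"
proof -
  from assms obtain b r where a: "a \<in> point_space" and "b \<in> point_space" "r > 0" and ba: "point_dist b a < r"
    and P: "\<forall>c\<in>point_space. point_dist b c < r \<longrightarrow> P c" unfolding UP_iff by blast
  from P a ba show ?thesis by blast
qed

lemma UP_open:
  assumes "a \<in> UP P"
  shows "\<exists>r>0. \<forall>c\<in>point_space. point_dist a c < r \<longrightarrow> c \<in> UP P"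
proof -
  from assms obtain b r where a: "a \<in> point_space" and b: "b \<in> point_space" and r: "r > 0"
    and ba: "point_dist b a < r" and P: "\<forall>c\<in>point_space. point_dist b c < r \<longrightarrow> P c"
    unfolding UP_iff by blast
  show ?thesis
  proof (intro exI[of _ "r - point_dist b a"] conjI ballI impI)
    show "r - point_dist b a > 0" using ba by simp
    fix c assume c: "c \<in> point_space" and ac: "point_dist a c < r - point_dist b a"
    have "point_dist b c \<le> point_dist b a + point_dist a c" by (rule dist_tri[OF b a c])
    then have "point_dist b c < r" using ac by simp
    then show "c \<in> UP P" unfolding UP_iff using c b P r by blast
  qed
qed

lemma UP_memI:
  assumes "b \<in> point_space" "r > 0" "\<forall>c\<in>point_space. point_dist b c < r \<longrightarrow> P c"
  shows "b \<in> UP P"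
proof -
  have "point_dist b b < r" using assms(2) dist_self[of b] by simp
  then show ?thesis unfolding UP_iff using assms by blast
qed

lemma UA_dense:
  assumes k: "\<kappa> > 0" and kk: "k \<ge> 2" and a: "a \<in> point_space" and r: "r > 0"
  shows "\<exists>b\<in>UP (goodA \<kappa> k). point_dist a b < r"
proof -
  obtain N where N: "N \<ge> 1" "point_dist a (trunc N a) < r" using trunc_close[OF a r] by blast
  have t: "trunc N a \<in> point_space" by (rule trunc_ps[OF a])
  obtain r' where "r' > 0" "\<forall>c\<in>point_space. point_dist (trunc N a) c < r' \<longrightarrow> goodA \<kappa> k c"
    using A_local[OF k kk t N(1)] by (auto simp: trunc_def)
  then have "trunc N a \<in> UP (goodA \<kappa> k)" by (intro UP_memI[OF t])
  then show ?thesis using N by blast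
qed

lemma UB_dense:
  assumes k: "\<kappa> > 0" and kk: "k \<ge> 3" and a: "a \<in> point_space" and r: "r > 0"
  shows "\<exists>b\<in>UP (goodB \<kappa> k). point_dist a b < r"
proof -
  have r2: "r / 2 > 0" using r by simp
  obtain N where N: "N \<ge> 1" "point_dist a (trunc N a) < r / 2" using trunc_close[OF a r2] by blast
  have t: "trunc N a \<in> point_space" by (rule trunc_ps[OF a])
  define \<eta> where "\<eta> = min 1 ((r / 2)\<^sup>2)"
  have \<eta>: "0 < \<eta>" "\<eta> \<le> 1" using r by (auto simp: \<eta>_def)
  have s\<eta>: "sqrt \<eta> \<le> r / 2"
  proof -
    have "sqrt \<eta> \<le> sqrt ((r / 2)\<^sup>2)" by (intro real_sqrt_le_mono) (simp add: \<eta>_def)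
    then show ?thesis using r by simp
  qed
  obtain b r' where b: "b \<in> point_space" "point_dist (trunc N a) b \<le> sqrt \<eta>" and r': "r' > 0"
    and P: "\<forall>c\<in>point_space. point_dist b c < r' \<longrightarrow> goodB \<kappa> k c"
    using B_local[OF k kk a N(1) \<eta>] by blast
  have "b \<in> UP (goodB \<kappa> k)" by (rule UP_memI[OF b(1) r' P])
  moreover have "point_dist a b < r"
  proof -
    have "point_dist a b \<le> point_dist a (trunc N a) + point_dist (trunc N a) b" by (rule dist_tri[OF a t b(1)])
    then show ?thesis using N(2) b(2) s\<eta> by linarith
  qed
  ultimately show ?thesis by blast
qed

definition Ufam :: "real \<Rightarrow> nat \<Rightarrow> vec set" where
  "Ufam \<kappa> j = (if even j then UP (goodA \<kappa> (j div 2 + 3)) else UP (goodB \<kappa> (j div 2 + 3)))"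

lemma UP_props:
  assumes D: "\<And>a r. a \<in> point_space \<Longrightarrow> r > 0 \<Longrightarrow> \<exists>b\<in>UP P. point_dist a b < r"
  shows "UP P \<subseteq> point_space \<and>
      (\<forall>a\<in>UP P. \<exists>r>0. \<forall>b\<in>point_space. point_dist a b < r \<longrightarrow> b \<in> UP P) \<and>
      (\<forall>a\<in>point_space. \<forall>r>0. \<exists>b\<in>UP P. point_dist a b < r)"
proof (intro conjI)
  show "UP P \<subseteq> point_space" by (rule UP_sub)
  show "\<forall>a\<in>UP P. \<exists>r>0. \<forall>b\<in>point_space. point_dist a b < r \<longrightarrow> b \<in> UP P"
    using UP_open by blast
  show "\<forall>a\<in>point_space. \<forall>r>0. \<exists>b\<in>UP P. point_dist a b < r"
    using D by blast
qed

lemma Ufam_props: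
  assumes k: "\<kappa> > 0"
  shows "Ufam \<kappa> j \<subseteq> point_space \<and>
      (\<forall>a\<in>Ufam \<kappa> j. \<exists>r>0. \<forall>b\<in>point_space. point_dist a b < r \<longrightarrow> b \<in> Ufam \<kappa> j) \<and>
      (\<forall>a\<in>point_space. \<forall>r>0. \<exists>b\<in>Ufam \<kappa> j. point_dist a b < r)"
proof (cases "even j")
  case True
  then have e: "Ufam \<kappa> j = UP (goodA \<kappa> (j div 2 + 3))" by (simp add: Ufam_def)
  have "j div 2 + 3 \<ge> 2" by simp
  show ?thesis unfolding e by (rule UP_props[OF UA_dense[OF k \<open>j div 2 + 3 \<ge> 2\<close>]])
next
  case False
  then have e: "Ufam \<kappa> j = UP (goodB \<kappa> (j div 2 + 3))" by (simp add: Ufam_def)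
  have "j div 2 + 3 \<ge> 3" by simp
  show ?thesis unfolding e by (rule UP_props[OF UB_dense[OF k \<open>j div 2 + 3 \<ge> 3\<close>]])
qed

lemma generic_Ufam:
  assumes k: "\<kappa> > 0"
  shows "generic_point_set (\<Inter>j. Ufam \<kappa> j)"
  unfolding generic_point_set_def
proof (rule exI[of _ "Ufam \<kappa>"], rule conjI)
  show "\<forall>j. Ufam \<kappa> j \<subseteq> point_space \<and>
      (\<forall>a\<in>Ufam \<kappa> j. \<exists>r>0. \<forall>b\<in>point_space. point_dist a b < r \<longrightarrow> b \<in> Ufam \<kappa> j) \<and>
      (\<forall>a\<in>point_space. \<forall>r>0. \<exists>b\<in>Ufam \<kappa> j. point_dist a b < r)"
    using Ufam_props[OF k] by blast
qed simp

lemma memR: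
  assumes a: "a \<in> (\<Inter>j. Ufam \<kappa> j)" and k3: "k \<ge> 3"
  shows "a \<in> point_space \<and> goodA \<kappa> k a \<and> goodB \<kappa> k a"
proof -
  have A: "a \<in> Ufam \<kappa> (2 * (k - 3))" using a by blast
  have B: "a \<in> Ufam \<kappa> (2 * (k - 3) + 1)" using a by blast
  have d1: "(2 * (k - 3)) div 2 + 3 = k" "(2 * (k - 3) + 1) div 2 + 3 = k" using k3 by auto
  have eA: "Ufam \<kappa> (2 * (k - 3)) = UP (goodA \<kappa> k)" unfolding Ufam_def using d1 by simp
  have eB: "Ufam \<kappa> (2 * (k - 3) + 1) = UP (goodB \<kappa> k)" unfolding Ufam_def using d1 by simp
  have "a \<in> UP (goodA \<kappa> k)" "a \<in> UP (goodB \<kappa> k)" using A B eA eB by auto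
  then show ?thesis using UP_P UP_sub by blast
qed


lemma dims:
  assumes k: "\<kappa> > 0" and a: "a \<in> point_space"
    and good: "\<And>k. k \<ge> 3 \<Longrightarrow> goodA \<kappa> k a \<and> goodB \<kappa> k a"
    and q: "0 < q" "q < 1"
  shows "lower_gen_dim (spec_measure \<kappa> a) q = 0 \<and> upper_gen_dim (spec_measure \<kappa> a) q = ereal (1/3)"
proof -
  interpret pseq "pa a" by (rule pseq_pa[OF a])
  define T where "T = suminf (pa a)"
  define f where "f \<epsilon> = ereal (rat \<kappa> a q \<epsilon>)" for \<epsilon>
  have low: "lower_gen_dim (spec_measure \<kappa> a) q = Liminf (at_right 0) f"
    unfolding lower_gen_dim_def f_def rat_def ..
  have up: "upper_gen_dim (spec_measure \<kappa> a) q = Limsup (at_right 0) f"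
    unfolding upper_gen_dim_def f_def rat_def ..
  have T0: "T > 0"
  proof (rule ccontr)
    assume "\<not> T > 0"
    then have "T = 0" using T_nonneg by (simp add: T_def)
    then have p0: "\<And>n. pa a n = 0" using suminf_eq_zero_iff[OF sm nn] by (simp add: T_def)
    have "goodB \<kappa> 4 a" using good[of 4] by simp
    then obtain \<epsilon> where e: "\<epsilon> > 0" and
      R: "\<forall>q. 1 / real 4 \<le> q \<and> q \<le> 1 - 1 / real 4 \<longrightarrow> rat \<kappa> a q \<epsilon> \<ge> 1 / 3 - 1 / real 4"
      unfolding goodB_def by blast
    have "rat \<kappa> a (1/2) \<epsilon> \<ge> 1 / 3 - 1 / real 4" using R by simp
    moreover have "rat \<kappa> a (1/2) \<epsilon> = 0"
    proof -
      have "Jt \<kappa> (pa a) (1/2) \<epsilon> = (\<lambda>n. 0)" by (rule ext) (simp add: Jt_def p0)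
      then show ?thesis unfolding rat_def using I_mu_J[OF k a _ _ e, of "1/2"] by simp
    qed
    ultimately show False by simp
  qed
  define m where "m = min q (1 - q)"
  have m0: "m > 0" using q by (simp add: m_def)
  define k0 where "k0 = max 3 (nat \<lceil>1 / m\<rceil>)"
  have qrange: "1 / real k \<le> q \<and> q \<le> 1 - 1 / real k \<and> k \<ge> 3" if kk: "k \<ge> k0" for k
  proof -
    have "real k \<ge> real (nat \<lceil>1 / m\<rceil>)" using kk by (simp add: k0_def)
    moreover have "real (nat \<lceil>1 / m\<rceil>) \<ge> 1 / m" by (rule real_nat_ceiling_ge)
    ultimately have km: "real k \<ge> 1 / m" by linarith
    have k3: "k \<ge> 3" using kk by (simp add: k0_def)
    then have "real k > 0" by simp
    then have "1 / real k \<le> m" using km m0 by (simp add: field_simps)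
    then show ?thesis using k3 by (simp add: m_def)
  qed
  have Dpos: "(q - 1) * ln \<epsilon> > 0" if "0 < \<epsilon>" "\<epsilon> < 1" for \<epsilon>
    using q that by (intro mult_neg_neg) auto
  have Jlow: "suminf (Jt \<kappa> (pa a) q \<epsilon>) \<ge> T powr q" if "\<epsilon> > 0" for \<epsilon>
    unfolding T_def by (rule J_lower_T[OF k q that])
  have L1: "Liminf (at_right 0) f \<ge> 0"
  proof -
    define g where "g \<epsilon> = q * ln T / ((q - 1) * ln \<epsilon>)" for \<epsilon>
    have "((\<lambda>\<epsilon>. ereal (g \<epsilon>)) \<longlongrightarrow> ereal 0) (at_right 0)"
      unfolding g_def by (intro tendsto_ereal lim0 q)
    then have "Liminf (at_right 0) (\<lambda>\<epsilon>. ereal (g \<epsilon>)) = ereal 0"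
      by (rule lim_imp_Liminf[OF trivial_limit_at_right_real])
    moreover have "Liminf (at_right 0) (\<lambda>\<epsilon>. ereal (g \<epsilon>)) \<le> Liminf (at_right 0) f"
    proof (intro Liminf_mono eventually_mono[OF ev01])
      fix \<epsilon> :: real assume e: "0 < \<epsilon> \<and> \<epsilon> < 1"
      define J where "J = suminf (Jt \<kappa> (pa a) q \<epsilon>)"
      have TJ: "T powr q \<le> J" using Jlow e by (simp add: J_def)
      have Tq: "T powr q > 0" using T0 by simp
      have J0: "J > 0" using TJ Tq by linarith
      have "ln (T powr q) \<le> ln J" using TJ Tq J0 by (simp only: ln_le_cancel_iff)
      then have "q * ln T \<le> ln J" by (simp only: ln_powr)
      then have "g \<epsilon> \<le> ln J / ((q - 1) * ln \<epsilon>)"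
        unfolding g_def using Dpos[of \<epsilon>] e by (intro divide_right_mono) auto
      also have "\<dots> = rat \<kappa> a q \<epsilon>" using e by (simp add: rat_def I_mu_J[OF k a q] J_def)
      finally show "ereal (g \<epsilon>) \<le> f \<epsilon>" by (simp add: f_def)
    qed
    ultimately show ?thesis by (simp add: zero_ereal_def)
  qed
  have U1: "Limsup (at_right 0) f \<le> ereal (1/3)"
  proof -
    define C0 where "C0 = ln (Lam \<kappa> + 4) + q * ln T"
    define h where "h \<epsilon> = C0 / ((q - 1) * ln \<epsilon>) + 1/3" for \<epsilon>
    have "(h \<longlongrightarrow> 0 + 1/3) (at_right 0)"
      unfolding h_def by (intro tendsto_add lim0 q tendsto_const)
    then have "(h \<longlongrightarrow> 1/3) (at_right 0)" by simp
    then have "((\<lambda>\<epsilon>. ereal (h \<epsilon>)) \<longlongrightarrow> ereal (1/3)) (at_right 0)" by (rule tendsto_ereal)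
    then have "Limsup (at_right 0) (\<lambda>\<epsilon>. ereal (h \<epsilon>)) = ereal (1/3)"
      by (rule lim_imp_Limsup[OF trivial_limit_at_right_real])
    moreover have "Limsup (at_right 0) f \<le> Limsup (at_right 0) (\<lambda>\<epsilon>. ereal (h \<epsilon>))"
    proof (intro Limsup_mono eventually_mono[OF ev01])
      fix \<epsilon> :: real assume e: "0 < \<epsilon> \<and> \<epsilon> < 1"
      define J where "J = suminf (Jt \<kappa> (pa a) q \<epsilon>)"
      define E where "E = \<epsilon> powr (-1/3)"
      have E0: "E > 0" using e by (simp add: E_def)
      define U where "U = (Lam \<kappa> + 4) * E powr (1 - q) * T powr q"
      have JU: "J \<le> U" unfolding J_def U_def E_def T_def using e by (intro J_upper[OF k q]) auto
      have "T powr q > 0" using T0 by simp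
      moreover have "T powr q \<le> J" using Jlow[of \<epsilon>] e by (simp add: J_def)
      ultimately have J0: "J > 0" by linarith
      have L4: "Lam \<kappa> + 4 > 0" using Lam_pos[OF k] by simp
      have lnU: "ln U = C0 + (1 - q) * (- 1/3 * ln \<epsilon>)"
      proof -
        have "ln U = ln (Lam \<kappa> + 4) + ln (E powr (1 - q)) + ln (T powr q)"
          using L4 E0 T0 by (simp add: U_def ln_mult)
        also have "ln (E powr (1 - q)) = (1 - q) * (- 1/3 * ln \<epsilon>)" by (simp add: E_def ln_powr)
        also have "ln (T powr q) = q * ln T" by (simp add: ln_powr)
        finally show ?thesis by (simp add: C0_def)
      qed
      have "ln J \<le> ln U" using JU J0 by simp
      then have "ln J / ((q - 1) * ln \<epsilon>) \<le> ln U / ((q - 1) * ln \<epsilon>)"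
        using Dpos[of \<epsilon>] e by (intro divide_right_mono) auto
      also have "ln U / ((q - 1) * ln \<epsilon>) = h \<epsilon>"
      proof -
        have ne: "ln \<epsilon> \<noteq> 0" "q - 1 \<noteq> 0" using e q by auto
        have X: "(1 - q) * (- 1/3 * ln \<epsilon>) / ((q - 1) * ln \<epsilon>) = 1/3"
          using ne by (simp add: field_simps)
        show ?thesis by (simp only: lnU h_def add_divide_distrib X)
      qed
      finally have "rat \<kappa> a q \<epsilon> \<le> h \<epsilon>" using e by (simp add: rat_def I_mu_J[OF k a q] J_def)
      then show "f \<epsilon> \<le> ereal (h \<epsilon>)" by (simp add: f_def)
    qed
    ultimately show ?thesis by simp
  qed
  have L2: "Liminf (at_right 0) f \<le> 0"
  proof (rule Liminf_least)
    fix P :: "real \<Rightarrow> bool" assume "eventually P (at_right 0)"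
    then obtain d where d: "d > 0" "\<forall>y>0. y < d \<longrightarrow> P y"
      unfolding eventually_at_right_field by blast
    show "Inf (f ` Collect P) \<le> 0"
    proof (rule ereal_le_0[of k0])
      fix k assume kk: "k \<ge> k0"
      obtain k' where k': "k' \<ge> k" "1 / real k' < d" using small_k[OF d(1)] by blast
      have k'0: "k' \<ge> k0" using k' kk by simp
      have "goodA \<kappa> k' a" using good qrange[OF k'0] by blast
      then obtain \<epsilon> where e: "\<epsilon> > 0" "\<epsilon> < 1 / real k'"
        and R: "\<forall>q. 1 / real k' \<le> q \<and> q \<le> 1 - 1 / real k' \<longrightarrow> rat \<kappa> a q \<epsilon> \<le> 1 / real k'"
        unfolding goodA_def by blast
      have r: "rat \<kappa> a q \<epsilon> \<le> 1 / real k'" using R qrange[OF k'0] by blast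
      have "P \<epsilon>" using d(2) e k' by simp
      then have "Inf (f ` Collect P) \<le> f \<epsilon>" by (intro INF_lower) simp
      also have "f \<epsilon> \<le> ereal (1 / real k)"
      proof -
        have "1 / real k' \<le> 1 / real k" using k' qrange[OF kk] by (intro divide_left_mono) auto
        then show ?thesis using r by (simp add: f_def)
      qed
      finally show "Inf (f ` Collect P) \<le> ereal (1 / real k)" .
    qed
  qed
  have U2: "Limsup (at_right 0) f \<ge> ereal (1/3)"
  proof (rule Limsup_greatest)
    fix P :: "real \<Rightarrow> bool" assume "eventually P (at_right 0)"
    then obtain d where d: "d > 0" "\<forall>y>0. y < d \<longrightarrow> P y"
      unfolding eventually_at_right_field by blast
    show "ereal (1/3) \<le> Sup (f ` Collect P)"
    proof (rule ereal_ge_third[of k0])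
      fix k assume kk: "k \<ge> k0"
      obtain k' where k': "k' \<ge> k" "1 / real k' < d" using small_k[OF d(1)] by blast
      have k'0: "k' \<ge> k0" using k' kk by simp
      have "goodB \<kappa> k' a" using good qrange[OF k'0] by blast
      then obtain \<epsilon> where e: "\<epsilon> > 0" "\<epsilon> < 1 / real k'"
        and R: "\<forall>q. 1 / real k' \<le> q \<and> q \<le> 1 - 1 / real k' \<longrightarrow> rat \<kappa> a q \<epsilon> \<ge> 1 / 3 - 1 / real k'"
        unfolding goodB_def by blast
      have r: "rat \<kappa> a q \<epsilon> \<ge> 1 / 3 - 1 / real k'" using R qrange[OF k'0] by blast
      have "P \<epsilon>" using d(2) e k' by simp
      have "ereal (1 / 3 - 1 / real k) \<le> f \<epsilon>"
      proof -
        have "1 / real k' \<le> 1 / real k" using k' qrange[OF kk] by (intro divide_left_mono) auto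
        then show ?thesis using r by (simp add: f_def)
      qed
      also have "f \<epsilon> \<le> Sup (f ` Collect P)" using \<open>P \<epsilon>\<close> by (intro SUP_upper) simp
      finally show "ereal (1 / 3 - 1 / real k) \<le> Sup (f ` Collect P)" .
    qed
  qed
  have "Liminf (at_right 0) f = 0" by (rule antisym[OF L2 L1])
  moreover have "Limsup (at_right 0) f = ereal (1/3)" by (rule antisym[OF U1 U2])
  ultimately show ?thesis unfolding low up by simp
qed

theorem theorem1:
  fixes \<kappa> :: real
  assumes "\<kappa> > 0"
  shows "\<exists>R. generic_point_set R \<and>
           (\<forall>a\<in>R. \<forall>q::real. 0 < q \<and> q < 1 \<longrightarrow>
              lower_gen_dim (spec_measure \<kappa> a) q = 0 \<and>
              upper_gen_dim (spec_measure \<kappa> a) q = ereal (1/3))"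
proof (rule exI[of _ "\<Inter>j. Ufam \<kappa> j"], rule conjI)
  show "generic_point_set (\<Inter>j. Ufam \<kappa> j)" by (rule generic_Ufam[OF assms])
  show "\<forall>a\<in>(\<Inter>j. Ufam \<kappa> j). \<forall>q::real. 0 < q \<and> q < 1 \<longrightarrow>
              lower_gen_dim (spec_measure \<kappa> a) q = 0 \<and>
              upper_gen_dim (spec_measure \<kappa> a) q = ereal (1/3)"
  proof (intro ballI allI impI)
    fix a and q :: real assume a: "a \<in> (\<Inter>j. Ufam \<kappa> j)" and q: "0 < q \<and> q < 1"
    have aps: "a \<in> point_space" using memR[OF a, of 3] by simp
    have good: "\<And>k. k \<ge> 3 \<Longrightarrow> goodA \<kappa> k a \<and> goodB \<kappa> k a" using memR[OF a] by blast
    show "lower_gen_dim (spec_measure \<kappa> a) q = 0 \<and> upper_gen_dim (spec_measure \<kappa> a) q = ereal (1/3)"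
      by (rule dims[OF assms aps good]) (use q in auto)
  qed
qed

end
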